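(* Let $\kappa\geq\aleph_1$ be a cardinal and let $\Omega$ be a monoid whose underlying set lies in $\mathbf{Set}_\kappa$. Then the category $\mathrm{Trisk}_\Omega(\mathbf{Set}_\kappa)$, with the monoidal product $\oplus$ (unit $\emptyset$) and the trace operation $\mathrm{Tr}$ described below, is a traced monoidal category.
   Context: $\mathbf{Set}_\kappa$ is the category of sets of cardinality less than $\kappa$. A triskell from $S$ to $T$ with weights in a monoid $(\Omega,\cdot,1)$ is a tuple $(E,S,T,\Omega,s,t,w)$ of sets $E,S,T$ and maps $s:E\to S$, $t:E\to T$, $w:E\to\Omega$ (elements of $E$ are called edges). The composite of $(E,S,T,\Omega,s,t,w)$ and $(E',T,T',\Omega,s',t',w')$ is the triskell from $S$ to $T'$ with edge set the pullback $P=\{(e,e')\in E\times E' : t(e)=s'(e')\}$, source $(e,e')\mapsto s(e)$, target $(e,e')\mapsto t'(e')$ and weight $(e,e')\mapsto w(e)\cdot w'(e')$. The category $\mathrm{Trisk}_\Omega(\mathbf{Set}_\kappa)$ has as objects the sets of $\mathbf{Set}_\kappa$ and as morphisms from $S$ to $T$ the triskells from $S$ to $T$ taken up to isomorphism (bijections of edge sets commuting with source, target and weight maps); the identity on $X$ is $(X,X,X,\Omega,\mathrm{id},\mathrm{id},x\mapsto 1)$. The monoidal product $\oplus$ sends triskells $(E,S,T,\Omega,s,t,w)$ and $(E',S',T',\Omega,s',t',w')$ to $(E+E',S+S',T+T',\Omega,s+s',t+t',(w,w'))$ (disjoint unions, with the weight given by $w$ on $E$ and $w'$ on $E'$); its unit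 $\emptyset$ is the empty set (the triskell with empty edge set on empty sets). Trace: given a triskell $T=(E,X+U,Y+U,\Omega,s,t,w)$, $\mathrm{Tr}_U(T)$ is the triskell from $X$ to $Y$ whose edges are the finite sequences $(e_1,\dots,e_k)$, $k\geq1$, of edges of $T$ with $s(e_1)\in X$, $t(e_i)=s(e_{i+1})\in U$ for $1\leq i<k$ and $t(e_k)\in Y$, with source $s(e_1)$, target $t(e_k)$ and weight $w(e_1)\cdot w(e_2)\cdots w(e_k)$ (the triskell of all finite paths from $X$ to $Y$ in $T$). *)

theory Defs
  imports Main
begin

unbundle cardinal_syntax

text \<open>Cardinals are represented, as in the HOL library, by cardinal orders \<open>k :: 'k rel\<close>;
  a set \<open>A\<close> lies in Set_kappa iff \<open>card_of A <o k\<close>.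
  Weights live in a type \<open>'w\<close> of class \<open>monoid_mult\<close> (the monoid Omega, carrier = UNIV).\<close>

record ('e, 'a, 'b, 'w) trisk =
  edges   :: "'e set"
  dom_set :: "'a set"
  cod_set :: "'b set"
  src     :: "'e \<Rightarrow> 'a"
  tgt     :: "'e \<Rightarrow> 'b"
  wt      :: "'e \<Rightarrow> 'w"

text \<open>A triskell is a morphism S -> T of Trisk_Omega(Set_kappa).\<close>
definition thom :: "'k rel \<Rightarrow> ('e, 'a, 'b, 'w) trisk \<Rightarrow> 'a set \<Rightarrow> 'b set \<Rightarrow> bool" where
  "thom k X S T \<longleftrightarrow> dom_set X = S \<and> cod_set X = T \<and>
     src X ` edges X \<subseteq> S \<and> tgt X ` edges X \<subseteq> T \<and>
     card_of (edges X) <o k \<and> card_of S <o k \<and> card_of T <o k"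

text \<open>Isomorphism of triskells (equality of morphisms in Trisk_Omega).\<close>
definition tiso :: "('e, 'a, 'b, 'w) trisk \<Rightarrow> ('f, 'a, 'b, 'w) trisk \<Rightarrow> bool" where
  "tiso X Y \<longleftrightarrow> dom_set X = dom_set Y \<and> cod_set X = cod_set Y \<and>
     (\<exists>f. bij_betw f (edges X) (edges Y) \<and>
          (\<forall>e\<in>edges X. src Y (f e) = src X e \<and> tgt Y (f e) = tgt X e \<and> wt Y (f e) = wt X e))"

text \<open>Composite (diagrammatic order: first X, then Y), via the pullback of edges.\<close>
definition tcomp :: "('e, 'a, 'b, 'w::monoid_mult) trisk \<Rightarrow> ('f, 'b, 'c, 'w) trisk \<Rightarrow> ('e \<times> 'f, 'a, 'c, 'w) trisk" where
  "tcomp X Y = \<lparr> edges = {(e, e'). e \<in> edges X \<and> e' \<in> edges Y \<and> tgt X e = src Y e'},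
                 dom_set = dom_set X, cod_set = cod_set Y,
                 src = (\<lambda>(e, e'). src X e), tgt = (\<lambda>(e, e'). tgt Y e'),
                 wt = (\<lambda>(e, e'). wt X e * wt Y e') \<rparr>"

definition tsum :: "('e, 'a, 'b, 'w) trisk \<Rightarrow> ('f, 'c, 'd, 'w) trisk \<Rightarrow> ('e + 'f, 'a + 'c, 'b + 'd, 'w) trisk" where
  "tsum X Y = \<lparr> edges = edges X <+> edges Y,
                dom_set = dom_set X <+> dom_set Y, cod_set = cod_set X <+> cod_set Y,
                src = map_sum (src X) (src Y), tgt = map_sum (tgt X) (tgt Y),
                wt = case_sum (wt X) (wt Y) \<rparr>"

definition tfun :: "'a set \<Rightarrow> 'b set \<Rightarrow> ('a \<Rightarrow> 'b) \<Rightarrow> ('a, 'a, 'b, 'w::monoid_mult) trisk" where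
  "tfun A B f = \<lparr> edges = A, dom_set = A, cod_set = B, src = id, tgt = f, wt = (\<lambda>_. 1) \<rparr>"

definition tid :: "'a set \<Rightarrow> ('a, 'a, 'a, 'w::monoid_mult) trisk" where
  "tid A = tfun A A id"

definition tassoc :: "'a set \<Rightarrow> 'b set \<Rightarrow> 'c set \<Rightarrow> (('a + 'b) + 'c, ('a + 'b) + 'c, 'a + ('b + 'c), 'w::monoid_mult) trisk" where
  "tassoc A B C = tfun ((A <+> B) <+> C) (A <+> (B <+> C)) (case_sum (case_sum Inl (Inr \<circ> Inl)) (Inr \<circ> Inr))"

definition tassoc_inv :: "'a set \<Rightarrow> 'b set \<Rightarrow> 'c set \<Rightarrow> ('a + ('b + 'c), 'a + ('b + 'c), ('a + 'b) + 'c, 'w::monoid_mult) trisk" where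
  "tassoc_inv A B C = tfun (A <+> (B <+> C)) ((A <+> B) <+> C) (case_sum (Inl \<circ> Inl) (case_sum (Inl \<circ> Inr) Inr))"

definition tlunit :: "'a set \<Rightarrow> ('z + 'a, 'z + 'a, 'a, 'w::monoid_mult) trisk" where
  "tlunit A = tfun ({} <+> A) A projr"

definition tlunit_inv :: "'a set \<Rightarrow> ('a, 'a, 'z + 'a, 'w::monoid_mult) trisk" where
  "tlunit_inv A = tfun A ({} <+> A) Inr"

definition trunit :: "'a set \<Rightarrow> ('a + 'z, 'a + 'z, 'a, 'w::monoid_mult) trisk" where
  "trunit A = tfun (A <+> {}) A projl"

definition trunit_inv :: "'a set \<Rightarrow> ('a, 'a, 'a + 'z, 'w::monoid_mult) trisk" where
  "trunit_inv A = tfun A (A <+> {}) Inl"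

definition tswap :: "'a set \<Rightarrow> 'b set \<Rightarrow> ('a + 'b, 'a + 'b, 'b + 'a, 'w::monoid_mult) trisk" where
  "tswap A B = tfun (A <+> B) (B <+> A) (case_sum Inr Inl)"

text \<open>Trace: all finite nonempty paths from the X-part to the Y-part through U.\<close>
definition ttrace :: "('e, 'a + 'u, 'b + 'u, 'w::monoid_mult) trisk \<Rightarrow> ('e list, 'a, 'b, 'w) trisk" where
  "ttrace X = \<lparr> edges = {es. es \<noteq> [] \<and> set es \<subseteq> edges X \<and> isl (src X (hd es)) \<and>
                         (\<forall>i. Suc i < length es \<longrightarrow>
                              (\<exists>u. tgt X (es ! i) = Inr u \<and> src X (es ! Suc i) = Inr u)) \<and>
                         isl (tgt X (last es))},
                dom_set = {x. Inl x \<in> dom_set X}, cod_set = {y. Inl y \<in> cod_set X},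
                src = (\<lambda>es. projl (src X (hd es))), tgt = (\<lambda>es. projl (tgt X (last es))),
                wt = (\<lambda>es. prod_list (map (wt X) es)) \<rparr>"

end

theory Submission
  imports Defs
begin


lemma k_inf: assumes "Card_order k" "natLeq <o k" shows "\<not> finite (Field k)"
proof -
  have "natLeq \<le>o k" using assms(2) ordLess_imp_ordLeq by blast
  moreover have "k =o |Field k|" using card_of_Field_ordIso[OF assms(1)] ordIso_symmetric by blast
  ultimately have "natLeq \<le>o |Field k|" using ordLeq_ordIso_trans by blast
  thus ?thesis using infinite_iff_natLeq_ordLeq by blast
qed

lemma small_sub: "|B| <o k \<Longrightarrow> A \<subseteq> B \<Longrightarrow> |A| <o k"
  using card_of_mono1 ordLeq_ordLess_trans by blast

lemma small_image: "|A| <o k \<Longrightarrow> |f ` A| <o k"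
  using card_of_image ordLeq_ordLess_trans by blast

lemma small_finite: assumes "natLeq <o k" "finite A" shows "|A| <o k"
  using assms finite_iff_ordLess_natLeq ordLess_transitive by blast

lemma small_empty: "natLeq <o k \<Longrightarrow> |{}| <o k"
  using small_finite by blast

lemma small_Plus: assumes "Card_order k" "natLeq <o k" "|A| <o k" "|B| <o k"
  shows "|A <+> B| <o k"
  using card_of_Plus_ordLess_infinite_Field[OF k_inf[OF assms(1,2)] assms(1,3,4)] .

lemma small_Times: assumes k: "Card_order k" "natLeq <o k" and "|A| <o k" "|B| <o k"
  shows "|A \<times> B| <o k"
proof (cases "finite (A <+> B)")
  case True
  then have "finite (A \<times> B)" by (simp add: finite_Plus_iff)
  then show ?thesis using small_finite k by blast
next
  case False
  have M: "|A <+> B| <o k" using small_Plus assms by blast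
  have "|A \<times> B| \<le>o |(A <+> B) \<times> (A <+> B)|"
  proof -
    have e1: "A \<times> B = (\<lambda>(x,y). (projl x, projr y)) ` ((Inl ` A) \<times> (Inr ` B))"
      by (force simp: image_iff)
    have "(Inl ` A) \<times> (Inr ` B) \<subseteq> (A <+> B) \<times> (A <+> B)" by auto
    then show ?thesis
      apply (subst e1) using ordLeq_transitive[OF card_of_image[of "\<lambda>(x,y). (projl x, projr y)" "(Inl ` A) \<times> (Inr ` B)"]
        card_of_mono1[of "(Inl ` A) \<times> (Inr ` B)" "(A <+> B) \<times> (A <+> B)"]] by simp
  qed
  also have "|(A <+> B) \<times> (A <+> B)| =o |A <+> B|" using card_of_Times_same_infinite False by blast
  finally have "|A \<times> B| \<le>o |A <+> B|" using ordLeq_ordIso_trans by blast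
  thus ?thesis using M ordLeq_ordLess_trans by blast
qed

lemma lists_len_le: assumes "\<not> finite M"
  shows "|{xs. set xs \<subseteq> M \<and> length xs = n}| \<le>o |M|"
proof (induction n)
  case 0
  have "{xs. set xs \<subseteq> M \<and> length xs = 0} = {[]}" by auto
  moreover obtain m where "m \<in> M" using assms by (metis ex_in_conv finite.emptyI)
  ultimately show ?case using card_of_singl_ordLeq[of M "[]"] by auto
next
  case (Suc n)
  have e1: "{xs. set xs \<subseteq> M \<and> length xs = Suc n} = (\<lambda>(x,xs). x # xs) ` (M \<times> {xs. set xs \<subseteq> M \<and> length xs = n})"
    by (auto simp: image_iff length_Suc_conv)
  then have "|{xs. set xs \<subseteq> M \<and> length xs = Suc n}| \<le>o |M \<times> {xs. set xs \<subseteq> M \<and> length xs = n}|"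
    by (subst e1) (rule card_of_image)
  also have "|M \<times> {xs. set xs \<subseteq> M \<and> length xs = n}| \<le>o |M \<times> M|"
    using Suc card_of_Times_mono2 by blast
  also have "|M \<times> M| =o |M|" using card_of_Times_same_infinite assms by blast
  finally show ?case using ordLeq_ordIso_trans by blast
qed

lemma lists_inf: assumes "\<not> finite M" shows "|{xs. set xs \<subseteq> M}| \<le>o |M|"
proof -
  have "{xs. set xs \<subseteq> M} = (\<Union>n\<in>UNIV. {xs. set xs \<subseteq> M \<and> length xs = n})" by auto
  moreover have "|UNIV :: nat set| \<le>o |M|" using assms infinite_iff_card_of_nat by blast
  ultimately show ?thesis using card_of_UNION_ordLeq_infinite[OF assms, of UNIV "\<lambda>n. {xs. set xs \<subseteq> M \<and> length xs = n}"] lists_len_le[OF assms] by simp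
qed

lemma small_lists: assumes k: "Card_order k" "natLeq <o k" and A: "|A| <o k"
  shows "|{xs. set xs \<subseteq> A}| <o k"
proof -
  let ?M = "A <+> (UNIV :: nat set)"
  have "|UNIV :: nat set| <o k" using card_of_nat k(2) ordIso_ordLess_trans by blast
  then have M: "|?M| <o k" using small_Plus k A by blast
  have inf: "\<not> finite ?M" by (simp add: finite_Plus_iff)
  have e1: "{xs. set xs \<subseteq> A} = map projl ` {xs. set xs \<subseteq> Inl ` A}"
  proof
    show "{xs. set xs \<subseteq> A} \<subseteq> map projl ` {xs. set xs \<subseteq> Inl ` A}"
    proof
      fix xs assume "xs \<in> {xs. set xs \<subseteq> A}"
      then show "xs \<in> map projl ` {xs. set xs \<subseteq> Inl ` A}"
        by (intro image_eqI[of _ _ "map Inl xs"]) (auto simp: comp_def)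
    qed
  qed force
  have "{xs. set xs \<subseteq> Inl ` A} \<subseteq> {xs. set xs \<subseteq> ?M}" by auto
  then have "|{xs. set xs \<subseteq> A}| \<le>o |{xs. set xs \<subseteq> ?M}|"
    apply (subst e1)
    using ordLeq_transitive[OF card_of_image[of "map projl" "{xs. set xs \<subseteq> Inl ` A}"]
        card_of_mono1[of "{xs. set xs \<subseteq> Inl ` A}" "{xs. set xs \<subseteq> ?M}"]] by simp
  also have "|{xs. set xs \<subseteq> ?M}| \<le>o |?M|" using lists_inf inf by blast
  finally show ?thesis using M ordLeq_ordLess_trans by blast
qed


lemma tisoI:
  assumes "dom_set X = dom_set Y" "cod_set X = cod_set Y"
    and "\<And>e. e \<in> edges X \<Longrightarrow> g e \<in> edges Y"
    and "\<And>e. e \<in> edges Y \<Longrightarrow> h e \<in> edges X"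
    and "\<And>e. e \<in> edges X \<Longrightarrow> h (g e) = e"
    and "\<And>e. e \<in> edges Y \<Longrightarrow> g (h e) = e"
    and "\<And>e. e \<in> edges X \<Longrightarrow> src Y (g e) = src X e"
    and "\<And>e. e \<in> edges X \<Longrightarrow> tgt Y (g e) = tgt X e"
    and "\<And>e. e \<in> edges X \<Longrightarrow> wt Y (g e) = wt X e"
  shows "tiso X Y"
  unfolding tiso_def using assms
  by (intro conjI exI[of _ g]) (auto intro!: bij_betw_byWitness[of _ h])

lemma tisoE:
  assumes "tiso X Y"
  obtains g h where "dom_set X = dom_set Y" "cod_set X = cod_set Y"
    "\<And>e. e \<in> edges X \<Longrightarrow> g e \<in> edges Y"
    "\<And>e. e \<in> edges Y \<Longrightarrow> h e \<in> edges X"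
    "\<And>e. e \<in> edges X \<Longrightarrow> h (g e) = e"
    "\<And>e. e \<in> edges Y \<Longrightarrow> g (h e) = e"
    "\<And>e. e \<in> edges X \<Longrightarrow> src Y (g e) = src X e"
    "\<And>e. e \<in> edges X \<Longrightarrow> tgt Y (g e) = tgt X e"
    "\<And>e. e \<in> edges X \<Longrightarrow> wt Y (g e) = wt X e"
proof -
  obtain g where d: "dom_set X = dom_set Y" "cod_set X = cod_set Y" and b: "bij_betw g (edges X) (edges Y)"
    and p: "\<forall>e\<in>edges X. src Y (g e) = src X e \<and> tgt Y (g e) = tgt X e \<and> wt Y (g e) = wt X e"
    using assms unfolding tiso_def by blast
  show ?thesis
    apply (rule that[of g "inv_into (edges X) g"])
    using d b p by (auto simp: bij_betw_def inv_into_into bij_betw_inv_into_right)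
qed

lemma tiso_refl: "tiso X X"
  by (rule tisoI[of _ _ id id]) auto

lemma tiso_sym: assumes "tiso X Y" shows "tiso Y X"
  using assms by (elim tisoE) (rule tisoI, auto, metis+)

lemma tiso_trans: assumes "tiso X Y" "tiso Y Z" shows "tiso X Z"
proof -
  obtain g h where A: "dom_set X = dom_set Y" "cod_set X = cod_set Y"
    "\<And>e. e \<in> edges X \<Longrightarrow> g e \<in> edges Y"
    "\<And>e. e \<in> edges Y \<Longrightarrow> h e \<in> edges X"
    "\<And>e. e \<in> edges X \<Longrightarrow> h (g e) = e"
    "\<And>e. e \<in> edges Y \<Longrightarrow> g (h e) = e"
    "\<And>e. e \<in> edges X \<Longrightarrow> src Y (g e) = src X e"
    "\<And>e. e \<in> edges X \<Longrightarrow> tgt Y (g e) = tgt X e"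
    "\<And>e. e \<in> edges X \<Longrightarrow> wt Y (g e) = wt X e" by (rule tisoE[OF assms(1)]) blast
  obtain g' h' where B: "dom_set Y = dom_set Z" "cod_set Y = cod_set Z"
    "\<And>e. e \<in> edges Y \<Longrightarrow> g' e \<in> edges Z"
    "\<And>e. e \<in> edges Z \<Longrightarrow> h' e \<in> edges Y"
    "\<And>e. e \<in> edges Y \<Longrightarrow> h' (g' e) = e"
    "\<And>e. e \<in> edges Z \<Longrightarrow> g' (h' e) = e"
    "\<And>e. e \<in> edges Y \<Longrightarrow> src Z (g' e) = src Y e"
    "\<And>e. e \<in> edges Y \<Longrightarrow> tgt Z (g' e) = tgt Y e"
    "\<And>e. e \<in> edges Y \<Longrightarrow> wt Z (g' e) = wt Y e" by (rule tisoE[OF assms(2)]) blast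
  show ?thesis
    by (rule tisoI[of _ _ "g' \<circ> g" "h \<circ> h'"]) (simp_all add: A B)
qed

lemma tcomp_cong: assumes "tiso X X'" "tiso Y Y'" shows "tiso (tcomp X Y) (tcomp X' Y')"
proof -
  obtain g h where A: "dom_set X = dom_set X'" "cod_set X = cod_set X'"
    "\<And>e. e \<in> edges X \<Longrightarrow> g e \<in> edges X'"
    "\<And>e. e \<in> edges X' \<Longrightarrow> h e \<in> edges X"
    "\<And>e. e \<in> edges X \<Longrightarrow> h (g e) = e"
    "\<And>e. e \<in> edges X' \<Longrightarrow> g (h e) = e"
    "\<And>e. e \<in> edges X \<Longrightarrow> src X' (g e) = src X e"
    "\<And>e. e \<in> edges X \<Longrightarrow> tgt X' (g e) = tgt X e"
    "\<And>e. e \<in> edges X \<Longrightarrow> wt X' (g e) = wt X e" by (rule tisoE[OF assms(1)]) blast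
  obtain g' h' where B: "dom_set Y = dom_set Y'" "cod_set Y = cod_set Y'"
    "\<And>e. e \<in> edges Y \<Longrightarrow> g' e \<in> edges Y'"
    "\<And>e. e \<in> edges Y' \<Longrightarrow> h' e \<in> edges Y"
    "\<And>e. e \<in> edges Y \<Longrightarrow> h' (g' e) = e"
    "\<And>e. e \<in> edges Y' \<Longrightarrow> g' (h' e) = e"
    "\<And>e. e \<in> edges Y \<Longrightarrow> src Y' (g' e) = src Y e"
    "\<And>e. e \<in> edges Y \<Longrightarrow> tgt Y' (g' e) = tgt Y e"
    "\<And>e. e \<in> edges Y \<Longrightarrow> wt Y' (g' e) = wt Y e" by (rule tisoE[OF assms(2)]) blast
  show ?thesis
    apply (rule tisoI[of _ _ "map_prod g g'" "map_prod h h'"])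
    using A B by (auto simp: tcomp_def) (metis)+
qed

lemma tsum_cong: assumes "tiso X X'" "tiso Y Y'" shows "tiso (tsum X Y) (tsum X' Y')"
proof -
  obtain g h where A: "dom_set X = dom_set X'" "cod_set X = cod_set X'"
    "\<And>e. e \<in> edges X \<Longrightarrow> g e \<in> edges X'"
    "\<And>e. e \<in> edges X' \<Longrightarrow> h e \<in> edges X"
    "\<And>e. e \<in> edges X \<Longrightarrow> h (g e) = e"
    "\<And>e. e \<in> edges X' \<Longrightarrow> g (h e) = e"
    "\<And>e. e \<in> edges X \<Longrightarrow> src X' (g e) = src X e"
    "\<And>e. e \<in> edges X \<Longrightarrow> tgt X' (g e) = tgt X e"
    "\<And>e. e \<in> edges X \<Longrightarrow> wt X' (g e) = wt X e" by (rule tisoE[OF assms(1)]) blast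
  obtain g' h' where B: "dom_set Y = dom_set Y'" "cod_set Y = cod_set Y'"
    "\<And>e. e \<in> edges Y \<Longrightarrow> g' e \<in> edges Y'"
    "\<And>e. e \<in> edges Y' \<Longrightarrow> h' e \<in> edges Y"
    "\<And>e. e \<in> edges Y \<Longrightarrow> h' (g' e) = e"
    "\<And>e. e \<in> edges Y' \<Longrightarrow> g' (h' e) = e"
    "\<And>e. e \<in> edges Y \<Longrightarrow> src Y' (g' e) = src Y e"
    "\<And>e. e \<in> edges Y \<Longrightarrow> tgt Y' (g' e) = tgt Y e"
    "\<And>e. e \<in> edges Y \<Longrightarrow> wt Y' (g' e) = wt Y e" by (rule tisoE[OF assms(2)]) blast
  show ?thesis
    apply (rule tisoI[of _ _ "map_sum g g'" "map_sum h h'"])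
    using A B by (auto simp: tsum_def)
qed

lemma tcomp_tfun: assumes "f ` A \<subseteq> B"
  shows "tiso (tcomp (tfun A B f) (tfun B C g)) (tfun A C (g \<circ> f))"
  by (rule tisoI[of _ _ fst "\<lambda>a. (a, f a)"]) (use assms in \<open>auto simp: tcomp_def tfun_def\<close>)

lemma tfun_cong: assumes "\<And>a. a \<in> A \<Longrightarrow> f a = g a"
  shows "tiso (tfun A B f) (tfun A B g)"
  by (rule tisoI[of _ _ id id]) (use assms in \<open>auto simp: tfun_def\<close>)

lemma tsum_tfun: "tsum (tfun A B f) (tfun C D g) = tfun (A <+> C) (B <+> D) (map_sum f g)"
  by (auto simp: tsum_def tfun_def map_sum.id fun_eq_iff split: sum.splits)

lemma small_edges: "thom k X S T \<Longrightarrow> |edges X| <o k" by (simp add: thom_def)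

lemma thom_tfun: "|A| <o k \<Longrightarrow> |B| <o k \<Longrightarrow> f ` A \<subseteq> B \<Longrightarrow> thom k (tfun A B f) A B"
  by (simp add: thom_def tfun_def)


lemma Plus_iff: "x \<in> A <+> B \<longleftrightarrow> (case x of Inl a \<Rightarrow> a \<in> A | Inr b \<Rightarrow> b \<in> B)"
  by (auto split: sum.splits)

lemma C_tid: "|S| <o k \<Longrightarrow> thom k (tid S) S S"
  unfolding tid_def by (rule thom_tfun) auto

lemma C_comp: assumes k: "Card_order k" "natLeq <o k" and "thom k X S T" "thom k Y T U"
  shows "thom k (tcomp X Y) S U"
proof -
  have "edges (tcomp X Y) \<subseteq> edges X \<times> edges Y" by (auto simp: tcomp_def)
  moreover have "|edges X \<times> edges Y| <o k" using small_Times[OF k] small_edges[OF assms(3)] small_edges[OF assms(4)] by blast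
  ultimately have "|edges (tcomp X Y)| <o k" using small_sub by blast
  then show ?thesis using assms(3,4) by (auto simp: thom_def tcomp_def)
qed

lemma C_lunit: assumes "thom k X S T" shows "tiso (tcomp (tid S) X) X"
proof -
  have a: "\<And>e. e \<in> edges X \<Longrightarrow> src X e \<in> S" "dom_set X = S" "cod_set X = T" using assms by (auto simp: thom_def)
  show ?thesis
  by (rule tisoI[of _ _ snd "\<lambda>e. (src X e, e)"]) (simp_all add: tcomp_def tid_def tfun_def a split: prod.splits)
qed

lemma C_runit: assumes "thom k X S T" shows "tiso (tcomp X (tid T)) X"
proof -
  have a: "\<And>e. e \<in> edges X \<Longrightarrow> tgt X e \<in> T" "dom_set X = S" "cod_set X = T" using assms by (auto simp: thom_def)
  show ?thesis
  by (rule tisoI[of _ _ fst "\<lambda>e. (e, tgt X e)"]) (simp_all add: tcomp_def tid_def tfun_def a split_paired_all)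
qed

lemma C_assoc: "tiso (tcomp (tcomp X Y) Z) (tcomp X (tcomp Y Z))"
  by (rule tisoI[of _ _ "\<lambda>((a,b),c). (a,(b,c))" "\<lambda>(a,(b,c)). ((a,b),c)"])
     (simp_all add: tcomp_def mult.assoc split_paired_all)

lemma C_tsum: assumes k: "Card_order k" "natLeq <o k" and X: "thom k X S T" and Y: "thom k Y S' T'"
  shows "thom k (tsum X Y) (S <+> S') (T <+> T')"
proof -
  have "|edges X <+> edges Y| <o k" "|S <+> S'| <o k" "|T <+> T'| <o k"
    using X Y unfolding thom_def by (auto intro: small_Plus[OF k])
  then show ?thesis using X Y unfolding thom_def tsum_def by auto
qed

lemma C_interchange: 
  assumes "thom k X S T" "thom k X' T U" "thom k Y S' T'" "thom k Y' T' U'"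
  shows "tiso (tcomp (tsum X Y) (tsum X' Y')) (tsum (tcomp X X') (tcomp Y Y'))"
  apply (rule tisoI[of _ _ "\<lambda>(a,b). map_sum (\<lambda>e. (e, projl b)) (\<lambda>e. (e, projr b)) a"
        "case_sum (\<lambda>(e,e'). (Inl e, Inl e')) (\<lambda>(e,e'). (Inr e, Inr e'))"])
     apply (simp_all add: tcomp_def tsum_def split_paired_all Plus_iff split: sum.splits)
     done

lemma C_tsum_tid: "tiso (tsum (tid S) (tid S')) (tid (S <+> S'))"
  unfolding tid_def tsum_tfun by (rule tfun_cong) (auto split: sum.splits)


lemma tfun2: "f ` A \<subseteq> B \<Longrightarrow> (\<And>a. a \<in> A \<Longrightarrow> g (f a) = h a) \<Longrightarrow>
   tiso (tcomp (tfun A B f) (tfun B C g)) (tfun A C h)"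
  using tiso_trans[OF tcomp_tfun tfun_cong] by (metis comp_apply)

lemma tfun3: "f ` A \<subseteq> B \<Longrightarrow> g ` B \<subseteq> C \<Longrightarrow> (\<And>a. a \<in> A \<Longrightarrow> h (g (f a)) = k a) \<Longrightarrow>
   tiso (tcomp (tcomp (tfun A B f) (tfun B C g)) (tfun C D h)) (tfun A D k)"
proof -
  assume a: "f ` A \<subseteq> B" "g ` B \<subseteq> C" "\<And>a. a \<in> A \<Longrightarrow> h (g (f a)) = k a"
  have "tiso (tcomp (tcomp (tfun A B f) (tfun B C g)) (tfun C D h)) (tcomp (tfun A C (g \<circ> f)) (tfun C D h))"
    by (rule tcomp_cong[OF tcomp_tfun[OF a(1)] tiso_refl])
  moreover have "tiso (tcomp (tfun A C (g \<circ> f)) (tfun C D h)) (tfun A D k)"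
    by (rule tfun2) (use a in auto)
  ultimately show ?thesis by (rule tiso_trans)
qed

lemma S_assoc: assumes k: "Card_order k" "natLeq <o k" and "|A| <o k" "|B| <o k" "|C| <o k"
  shows "thom k (tassoc A B C :: (_, _, _, 'w::monoid_mult) trisk) ((A <+> B) <+> C) (A <+> (B <+> C))
    \<and> thom k (tassoc_inv A B C :: (_, _, _, 'w) trisk) (A <+> (B <+> C)) ((A <+> B) <+> C)
    \<and> tiso (tcomp (tassoc A B C) (tassoc_inv A B C) :: (_, _, _, 'w) trisk) (tid ((A <+> B) <+> C))
    \<and> tiso (tcomp (tassoc_inv A B C) (tassoc A B C) :: (_, _, _, 'w) trisk) (tid (A <+> (B <+> C)))"
  unfolding tassoc_def tassoc_inv_def tid_def
  by (intro conjI thom_tfun small_Plus[OF k] assms tfun2) (auto split: sum.splits)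

lemma S_unit: assumes k: "Card_order k" "natLeq <o k" and "|A| <o k"
  shows "thom k (tlunit A :: (_, _, _, 'w::monoid_mult) trisk) ({} <+> A) A
    \<and> thom k (tlunit_inv A :: (_, _, _, 'w) trisk) A ({} <+> A)
    \<and> tiso (tcomp (tlunit A) (tlunit_inv A) :: (_, _, _, 'w) trisk) (tid ({} <+> A))
    \<and> tiso (tcomp (tlunit_inv A) (tlunit A) :: (_, _, _, 'w) trisk) (tid A)
    \<and> thom k (trunit A :: (_, _, _, 'w) trisk) (A <+> {}) A
    \<and> thom k (trunit_inv A :: (_, _, _, 'w) trisk) A (A <+> {})
    \<and> tiso (tcomp (trunit A) (trunit_inv A) :: (_, _, _, 'w) trisk) (tid (A <+> {}))
    \<and> tiso (tcomp (trunit_inv A) (trunit A) :: (_, _, _, 'w) trisk) (tid A)"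
  unfolding tlunit_def tlunit_inv_def trunit_def trunit_inv_def tid_def
  by (intro conjI thom_tfun small_Plus[OF k] assms tfun2 small_empty[OF k(2)]) (auto split: sum.splits)

lemma S_pentagon: "tiso (tcomp (tassoc (A <+> B) C D) (tassoc A B (C <+> D)) :: (_, _, _, 'w::monoid_mult) trisk)
           (tcomp (tcomp (tsum (tassoc A B C) (tid D)) (tassoc A (B <+> C) D)) (tsum (tid A) (tassoc B C D)))"
  unfolding tassoc_def tid_def tsum_tfun
  by (rule tiso_trans[OF tfun2 tiso_sym[OF tfun3]]) (auto split: sum.splits)

lemma S_triangle: "tiso (tcomp (tassoc A {} B) (tsum (tid A) (tlunit B)) :: (_, _, _, 'w::monoid_mult) trisk)
           (tsum (trunit A) (tid B))"
  unfolding tassoc_def tid_def tlunit_def trunit_def tsum_tfun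
  by (rule tfun2) (auto split: sum.splits)

lemma S_swap: assumes k: "Card_order k" "natLeq <o k" and "|A| <o k" "|B| <o k"
  shows "thom k (tswap A B :: (_, _, _, 'w::monoid_mult) trisk) (A <+> B) (B <+> A)
    \<and> tiso (tcomp (tswap A B) (tswap B A) :: (_, _, _, 'w) trisk) (tid (A <+> B))"
  unfolding tswap_def tid_def
  by (intro conjI thom_tfun small_Plus[OF k] assms tfun2) (auto split: sum.splits)

lemma S_hexagon: "tiso (tcomp (tcomp (tassoc A B C) (tswap A (B <+> C))) (tassoc B C A) :: (_, _, _, 'w::monoid_mult) trisk)
           (tcomp (tcomp (tsum (tswap A B) (tid C)) (tassoc B A C)) (tsum (tid B) (tswap A C)))"
  unfolding tassoc_def tid_def tswap_def tsum_tfun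
  by (rule tiso_trans[OF tfun3 tiso_sym[OF tfun3]]) (auto split: sum.splits)


lemma thomD: assumes "thom k X S T"
  shows "dom_set X = S" "cod_set X = T" "\<And>e. e \<in> edges X \<Longrightarrow> src X e \<in> S" "\<And>e. e \<in> edges X \<Longrightarrow> tgt X e \<in> T"
  using assms by (auto simp: thom_def)

lemma N_assoc: assumes X: "thom k X A A'" and Y: "thom k Y B B'" and Z: "thom k Z C C'"
  shows "tiso (tcomp (tsum (tsum X Y) Z) (tassoc A' B' C')) (tcomp (tassoc A B C) (tsum X (tsum Y Z)))"
  apply (rule tisoI[of _ _ "\<lambda>(s,y). (map_sum (map_sum (src X) (src Y)) (src Z) s, case_sum (case_sum Inl (Inr \<circ> Inl)) (Inr \<circ> Inr) s)"
     "\<lambda>(x,s). (case_sum (Inl \<circ> Inl) (case_sum (Inl \<circ> Inr) Inr) s, map_sum (map_sum (tgt X) (tgt Y)) (tgt Z) (case_sum (Inl \<circ> Inl) (case_sum (Inl \<circ> Inr) Inr) s))"])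
  apply (simp_all add: tcomp_def tsum_def tassoc_def tfun_def split_paired_all Plus_iff thomD[OF X] thomD[OF Y] thomD[OF Z] split: sum.splits)
  done

lemma N_unit: assumes X: "thom k X A A'"
  shows "tiso (tcomp (tsum (tid {}) X) (tlunit A')) (tcomp (tlunit A) X)
    \<and> tiso (tcomp (tsum X (tid {})) (trunit A')) (tcomp (trunit A) X)"
  apply (rule conjI)
  apply (rule tisoI[of _ _ "\<lambda>(s,y). (Inr (src X (projr s)), projr s)" "\<lambda>(x,e). (Inr e, Inr (tgt X e))"])
  apply (simp_all add: tcomp_def tsum_def tid_def tlunit_def tfun_def split_paired_all Plus_iff thomD[OF X] split: sum.splits)
  apply (rule tisoI[of _ _ "\<lambda>(s,y). (Inl (src X (projl s)), projl s)" "\<lambda>(x,e). (Inl e, Inl (tgt X e))"])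
  apply (simp_all add: tcomp_def tsum_def tid_def trunit_def tfun_def split_paired_all Plus_iff thomD[OF X] split: sum.splits)
  done

lemma N_swap: assumes X: "thom k X A A'" and Y: "thom k Y B B'"
  shows "tiso (tcomp (tsum X Y) (tswap A' B')) (tcomp (tswap A B) (tsum Y X))"
  apply (rule tisoI[of _ _ "\<lambda>(s,y). (map_sum (src X) (src Y) s, case_sum Inr Inl s)"
     "\<lambda>(x,s). (case_sum Inr Inl s, map_sum (tgt X) (tgt Y) (case_sum Inr Inl s))"])
  apply (simp_all add: tcomp_def tsum_def tswap_def tfun_def split_paired_all Plus_iff thomD[OF X] thomD[OF Y] split: sum.splits)
  done


definition lnk :: "('e, 'a + 'u, 'b + 'u, 'w) trisk \<Rightarrow> 'e \<Rightarrow> 'e \<Rightarrow> bool" where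
  "lnk F a b \<longleftrightarrow> (\<exists>u. tgt F a = Inr u \<and> src F b = Inr u)"

lemma Inl_Plus[simp]: "Inl x \<in> A <+> B \<longleftrightarrow> x \<in> A" by auto
lemma Inr_Plus[simp]: "Inr x \<in> A <+> B \<longleftrightarrow> x \<in> B" by auto

lemma nth_succ: "(\<forall>i. Suc i < length xs \<longrightarrow> P (xs!i) (xs!Suc i)) \<longleftrightarrow> successively P xs"
proof (induction xs rule: induct_list012)
  case (3 x y zs)
  have "(\<forall>i. Suc i < length (x # y # zs) \<longrightarrow> P ((x # y # zs) ! i) ((x # y # zs) ! Suc i)) \<longleftrightarrow>
        P x y \<and> (\<forall>i. Suc i < length (y # zs) \<longrightarrow> P ((y # zs) ! i) ((y # zs) ! Suc i))"
    (is "?L \<longleftrightarrow> ?R")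
  proof
    assume ?L
    show ?R
    proof (intro conjI allI impI)
      show "P x y" using \<open>?L\<close>[rule_format, of 0] by simp
      fix i assume "Suc i < length (y # zs)"
      then show "P ((y # zs) ! i) ((y # zs) ! Suc i)" using \<open>?L\<close>[rule_format, of "Suc i"] by simp
    qed
  next
    assume ?R
    show ?L
    proof (intro allI impI)
      fix i assume "Suc i < length (x # y # zs)"
      then show "P ((x # y # zs) ! i) ((x # y # zs) ! Suc i)"
        using \<open>?R\<close> by (cases i) auto
    qed
  qed
  then show ?case using 3 by simp
qed auto

lemma edges_ttrace: "edges (ttrace F) = {es. es \<noteq> [] \<and> set es \<subseteq> edges F \<and> isl (src F (hd es)) \<and>
   successively (lnk F) es \<and> isl (tgt F (last es))}"
  unfolding ttrace_def lnk_def using nth_succ[of _ "\<lambda>a b. \<exists>u. tgt F a = Inr u \<and> src F b = Inr u"]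
  by simp

lemma src_ttrace: "src (ttrace F) es = projl (src F (hd es))" by (simp add: ttrace_def)
lemma tgt_ttrace: "tgt (ttrace F) es = projl (tgt F (last es))" by (simp add: ttrace_def)
lemma wt_ttrace: "wt (ttrace F) es = prod_list (map (wt F) es)" by (simp add: ttrace_def)
lemma dom_ttrace: "dom_set (ttrace F) = {x. Inl x \<in> dom_set F}" by (simp add: ttrace_def)
lemma cod_ttrace: "cod_set (ttrace F) = {x. Inl x \<in> cod_set F}" by (simp add: ttrace_def)

lemmas ttrace_simps = edges_ttrace src_ttrace tgt_ttrace wt_ttrace dom_ttrace cod_ttrace

lemma succ_pred: "successively P (x # xs) \<Longrightarrow> y \<in> set xs \<Longrightarrow> \<exists>z. P z y"
  by (induction xs arbitrary: x) (auto simp: successively_Cons)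

lemma T_thom: assumes k: "Card_order k" "natLeq <o k" and F: "thom k F (A <+> U) (B <+> U)"
  shows "thom k (ttrace F) A B"
proof -
  have sF: "\<And>e. e \<in> edges F \<Longrightarrow> src F e \<in> A <+> U" "\<And>e. e \<in> edges F \<Longrightarrow> tgt F e \<in> B <+> U"
    and d: "dom_set F = A <+> U" "cod_set F = B <+> U" and ks: "|edges F| <o k" "|A <+> U| <o k" "|B <+> U| <o k"
    using F by (auto simp: thom_def)
  have "edges (ttrace F) \<subseteq> {xs. set xs \<subseteq> edges F}" by (auto simp: edges_ttrace)
  then have e: "|edges (ttrace F)| <o k" using small_lists[OF k ks(1)] small_sub by blast
  have A: "|A| <o k" using card_of_Plus1[of A U] ks(2) ordLeq_ordLess_trans by blast
  have B: "|B| <o k" using card_of_Plus1[of B U] ks(3) ordLeq_ordLess_trans by blast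
  have s: "src (ttrace F) ` edges (ttrace F) \<subseteq> A"
  proof
    fix x assume "x \<in> src (ttrace F) ` edges (ttrace F)"
    then obtain es where es: "es \<in> edges (ttrace F)" "x = projl (src F (hd es))" by (auto simp: src_ttrace)
    then have "hd es \<in> edges F" "isl (src F (hd es))" by (auto simp: edges_ttrace)
    then show "x \<in> A" using sF(1)[of "hd es"] es(2) by (cases "src F (hd es)") auto
  qed
  have t: "tgt (ttrace F) ` edges (ttrace F) \<subseteq> B"
  proof
    fix x assume "x \<in> tgt (ttrace F) ` edges (ttrace F)"
    then obtain es where es: "es \<in> edges (ttrace F)" "x = projl (tgt F (last es))" by (auto simp: tgt_ttrace)
    then have "last es \<in> edges F" "isl (tgt F (last es))" by (auto simp: edges_ttrace)
    then show "x \<in> B" using sF(2)[of "last es"] es(2) by (cases "tgt F (last es)") auto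
  qed
  show ?thesis unfolding thom_def using e A B s t d by (simp add: dom_ttrace cod_ttrace)
qed

lemma T_cong: assumes "tiso F F'" shows "tiso (ttrace F) (ttrace F')"
proof -
  obtain g h where A: "dom_set F = dom_set F'" "cod_set F = cod_set F'"
    "\<And>e. e \<in> edges F \<Longrightarrow> g e \<in> edges F'"
    "\<And>e. e \<in> edges F' \<Longrightarrow> h e \<in> edges F"
    "\<And>e. e \<in> edges F \<Longrightarrow> h (g e) = e"
    "\<And>e. e \<in> edges F' \<Longrightarrow> g (h e) = e"
    "\<And>e. e \<in> edges F \<Longrightarrow> src F' (g e) = src F e"
    "\<And>e. e \<in> edges F \<Longrightarrow> tgt F' (g e) = tgt F e"
    "\<And>e. e \<in> edges F \<Longrightarrow> wt F' (g e) = wt F e" by (rule tisoE[OF assms]) blast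
  have B: "\<And>e. e \<in> edges F' \<Longrightarrow> src F (h e) = src F' e" "\<And>e. e \<in> edges F' \<Longrightarrow> tgt F (h e) = tgt F' e"
    using A by metis+
  show ?thesis
  proof (rule tisoI[of _ _ "map g" "map h"])
    fix es assume es: "es \<in> edges (ttrace F)"
    then have ne: "es \<noteq> []" and sub: "set es \<subseteq> edges F" by (auto simp: edges_ttrace)
    have sub': "\<And>x. x \<in> set es \<Longrightarrow> x \<in> edges F" using sub by blast
    show "map g es \<in> edges (ttrace F')"
    proof -
      have su: "successively (lnk F) es" "isl (src F (hd es))" "isl (tgt F (last es))" using es by (auto simp: edges_ttrace)
      have "successively (lnk F') (map g es)" unfolding successively_map
        by (rule successively_mono[OF su(1)]) (use sub' A(7,8) in \<open>auto simp: lnk_def\<close>)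
      moreover have "hd es \<in> edges F" "last es \<in> edges F" using ne sub by auto
      ultimately show ?thesis using ne sub su A(3,7,8) unfolding edges_ttrace by (auto simp: hd_map last_map)
    qed
    show "map h (map g es) = es" using sub A(5) by (induction es) auto
    show "src (ttrace F') (map g es) = src (ttrace F) es" using ne sub' A(7)[of "hd es"] by (simp add: src_ttrace hd_map)
    show "tgt (ttrace F') (map g es) = tgt (ttrace F) es" using ne sub' A(8)[of "last es"] by (simp add: tgt_ttrace last_map)
    show "wt (ttrace F') (map g es) = wt (ttrace F) es" using sub A(9) unfolding wt_ttrace
      by (induction es) auto
  next
    fix es assume es: "es \<in> edges (ttrace F')"
    then have ne: "es \<noteq> []" and sub: "set es \<subseteq> edges F'" by (auto simp: edges_ttrace)
    have sub': "\<And>x. x \<in> set es \<Longrightarrow> x \<in> edges F'" using sub by blast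
    show "map h es \<in> edges (ttrace F)"
    proof -
      have su: "successively (lnk F') es" "isl (src F' (hd es))" "isl (tgt F' (last es))" using es by (auto simp: edges_ttrace)
      have "successively (lnk F) (map h es)" unfolding successively_map
        by (rule successively_mono[OF su(1)]) (use sub' B in \<open>auto simp: lnk_def\<close>)
      moreover have "hd es \<in> edges F'" "last es \<in> edges F'" using ne sub by auto
      ultimately show ?thesis using ne sub su A(4) B unfolding edges_ttrace by (auto simp: hd_map last_map)
    qed
    show "map g (map h es) = es" using sub A(6) by (induction es) auto
  qed (auto simp: dom_ttrace cod_ttrace A(1,2))
qed


lemma tcomp_mem: "(a,b) \<in> edges (tcomp X Y) \<longleftrightarrow> a \<in> edges X \<and> b \<in> edges Y \<and> tgt X a = src Y b"
  by (simp add: tcomp_def)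
lemma tcomp_simps[simp]: "src (tcomp X Y) (a,b) = src X a" "tgt (tcomp X Y) (a,b) = tgt Y b"
  "wt (tcomp X Y) (a,b) = wt X a * wt Y b" "dom_set (tcomp X Y) = dom_set X" "cod_set (tcomp X Y) = cod_set Y"
  by (simp_all add: tcomp_def)
lemma tsum_simps[simp]: "edges (tsum X Y) = edges X <+> edges Y" "src (tsum X Y) = map_sum (src X) (src Y)"
  "tgt (tsum X Y) = map_sum (tgt X) (tgt Y)" "wt (tsum X Y) = case_sum (wt X) (wt Y)"
  "dom_set (tsum X Y) = dom_set X <+> dom_set Y" "cod_set (tsum X Y) = cod_set X <+> cod_set Y"
  by (simp_all add: tsum_def)
lemma tfun_simps[simp]: "edges (tfun A B f) = A" "src (tfun A B f) = id" "tgt (tfun A B f) = f"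
  "wt (tfun A B f) = (\<lambda>_. 1)" "dom_set (tfun A B f) = A" "cod_set (tfun A B f) = B"
  by (simp_all add: tfun_def)

lemma T_nat_in:
  fixes G :: "('g, 'a2, 'a, 'w::monoid_mult) trisk" and F :: "('f, 'a + 'u, 'b + 'u, 'w) trisk" and U :: "'u set"
  assumes G: "thom k G A' A" and F: "thom k F (A <+> U) (B <+> U)"
  shows "tiso (ttrace (tcomp (tsum G (tid U)) F)) (tcomp G (ttrace F))"
proof -
  let ?L = "tcomp (tsum G (tid U)) F"
  have Fs: "\<And>e. e \<in> edges F \<Longrightarrow> src F e \<in> A <+> U" using thomD(3)[OF F] .
  have struct: "\<exists>g f1 qs. ps = (Inl g, f1) # qs \<and> g \<in> edges G \<and> f1 \<in> edges F \<and> src F f1 = Inl (tgt G g) \<and>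
     (\<forall>p\<in>set qs. snd p \<in> edges F \<and> fst p = Inr (projr (src F (snd p))) \<and> \<not> isl (src F (snd p)))"
    if ps: "ps \<in> edges (ttrace ?L)" for ps
  proof -
    from ps have ne: "ps \<noteq> []" and sub: "set ps \<subseteq> edges ?L" and hs: "isl (src ?L (hd ps))"
      and su: "successively (lnk ?L) ps" by (auto simp: edges_ttrace)
    obtain s1 f1 qs where pe: "ps = (s1, f1) # qs" using ne by (metis list.exhaust prod.exhaust)
    have m1: "(s1, f1) \<in> edges ?L" using sub pe by auto
    then have s1: "s1 \<in> edges G <+> U" "f1 \<in> edges F" "map_sum (tgt G) id s1 = src F f1"
      by (auto simp: tcomp_mem tid_def)
    from hs pe have "isl (map_sum (src G) id s1)" by (simp add: tid_def)
    then obtain g where g: "s1 = Inl g" by (cases s1) auto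
    have "\<forall>p\<in>set qs. snd p \<in> edges F \<and> fst p = Inr (projr (src F (snd p))) \<and> \<not> isl (src F (snd p))"
    proof
      fix p assume p: "p \<in> set qs"
      obtain s f where sf: "p = (s, f)" by (cases p)
      obtain z where "lnk ?L z p" using succ_pred[of "lnk ?L" "(s1,f1)" qs p] su pe p by auto
      then obtain u where u: "map_sum (src G) id s = Inr u" by (auto simp: lnk_def sf tid_def)
      then have su': "s = Inr u" by (cases s) auto
      have "(s, f) \<in> edges ?L" using sub pe p sf by auto
      then have "f \<in> edges F" "map_sum (tgt G) id s = src F f" by (auto simp: tcomp_mem tid_def)
      then have "src F f = Inr u" "f \<in> edges F" using su' by auto
      then show "snd p \<in> edges F \<and> fst p = Inr (projr (src F (snd p))) \<and> \<not> isl (src F (snd p))"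
        using su' sf by simp
    qed
    then show ?thesis using pe g s1 by auto
  qed
  define \<phi> :: "(('g + 'u) \<times> 'f) list \<Rightarrow> 'g \<times> 'f list" where "\<phi> = (\<lambda>ps. (projl (fst (hd ps)), map snd ps))"
  define \<psi> :: "'g \<times> 'f list \<Rightarrow> (('g + 'u) \<times> 'f) list" where "\<psi> = (\<lambda>(g, es). (Inl g, hd es) # map (\<lambda>f. (Inr (projr (src F f)), f)) (tl es))"
  show ?thesis
  proof (rule tisoI[of _ _ \<phi> \<psi>])
    show "dom_set (ttrace ?L) = dom_set (tcomp G (ttrace F))"
      by (auto simp: dom_ttrace tid_def)
    show "cod_set (ttrace ?L) = cod_set (tcomp G (ttrace F))"
      by (auto simp: cod_ttrace)
  next
    fix ps assume ps: "ps \<in> edges (ttrace ?L)"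
    obtain g f1 qs where S: "ps = (Inl g, f1) # qs" "g \<in> edges G" "f1 \<in> edges F" "src F f1 = Inl (tgt G g)"
      "\<forall>p\<in>set qs. snd p \<in> edges F \<and> fst p = Inr (projr (src F (snd p))) \<and> \<not> isl (src F (snd p))"
      using struct[OF ps] by blast
    from ps have sub: "set ps \<subseteq> edges ?L" and su: "successively (lnk ?L) ps" and lt: "isl (tgt ?L (last ps))"
      by (auto simp: edges_ttrace)
    have qs_eq: "map (\<lambda>f. (Inr (projr (src F f)), f)) (map snd qs) = qs"
      using S(5) by (induction qs) auto
    have "successively (lnk F) (map snd ps)" unfolding successively_map
    proof (rule successively_mono[OF su])
      fix x y assume xy: "x \<in> set ps" "y \<in> set ps" "lnk ?L x y"
      obtain s f where y: "y = (s, f)" by (cases y)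
      obtain s' f' where x: "x = (s', f')" by (cases x)
      from xy(3) obtain u where u: "tgt F f' = Inr u" "map_sum (src G) id s = Inr u"
        by (auto simp: lnk_def x y tid_def)
      then have "s = Inr u" by (cases s) auto
      moreover have "map_sum (tgt G) id s = src F f" using sub xy(2) y by (auto simp: tcomp_mem tid_def)
      ultimately show "lnk F (snd x) (snd y)" using u by (simp add: lnk_def x y)
    qed
    moreover have lm: "last (map snd ps) = snd (last ps)" using S(1) by (simp add: last_map)
    moreover have "isl (tgt F (snd (last ps)))" using lt by (cases "last ps") simp
    ultimately show "\<phi> ps \<in> edges (tcomp G (ttrace F))"
      using S sub unfolding \<phi>_def by (auto simp: tcomp_mem edges_ttrace src_ttrace)
    show "\<psi> (\<phi> ps) = ps" unfolding \<phi>_def \<psi>_def using S(1) qs_eq by simp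
    show "src (tcomp G (ttrace F)) (\<phi> ps) = src (ttrace ?L) ps"
      unfolding \<phi>_def using S(1) by (simp add: src_ttrace tid_def)
    show "tgt (tcomp G (ttrace F)) (\<phi> ps) = tgt (ttrace ?L) ps"
      unfolding \<phi>_def using lm by (cases "last ps") (simp add: tgt_ttrace)
    have "map (wt ?L) qs = map (wt F \<circ> snd) qs" using S(5) by (induction qs) (auto simp: tid_def)
    then have "prod_list (map (wt ?L) qs) = prod_list (map (wt F \<circ> snd) qs)" by (rule arg_cong)
    then show "wt (tcomp G (ttrace F)) (\<phi> ps) = wt (ttrace ?L) ps"
      unfolding \<phi>_def using S(1) by (simp add: wt_ttrace tid_def mult.assoc)
  next
    fix ge assume ge: "ge \<in> edges (tcomp G (ttrace F))"
    obtain g es where gp: "ge = (g, es)" by (cases ge)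
    from ge have g: "g \<in> edges G" and es: "es \<in> edges (ttrace F)" and gt: "tgt G g = projl (src F (hd es))"
      by (auto simp: gp tcomp_mem src_ttrace)
    from es have ne: "es \<noteq> []" and sub: "set es \<subseteq> edges F" and hs: "isl (src F (hd es))"
      and su: "successively (lnk F) es" and lt: "isl (tgt F (last es))" by (auto simp: edges_ttrace)
    obtain f1 fs where ef: "es = f1 # fs" using ne by (cases es) auto
    have sf1: "src F f1 = Inl (tgt G g)" using hs gt ef by (cases "src F f1") auto
    have fsI: "\<And>f. f \<in> set fs \<Longrightarrow> \<exists>u. src F f = Inr u \<and> u \<in> U"
    proof -
      fix f assume f: "f \<in> set fs"
      obtain z where "lnk F z f" using succ_pred[of "lnk F" f1 fs f] su ef f by auto
      then obtain u where u: "src F f = Inr u" by (auto simp: lnk_def)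
      have "f \<in> edges F" using sub ef f by auto
      then have "src F f \<in> A <+> U" using Fs by blast
      then show "\<exists>u. src F f = Inr u \<and> u \<in> U" using u by auto
    qed
    let ?m = "\<lambda>f. (Inr (projr (src F f)), f)"
    have pe: "\<psi> ge = (Inl g, f1) # map ?m fs" unfolding \<psi>_def gp ef by simp
    have "map snd (\<psi> ge) = es" unfolding pe ef by (simp add: comp_def)
    show "\<phi> (\<psi> ge) = ge" unfolding \<phi>_def pe by (simp add: gp ef comp_def)
    have mem: "set (\<psi> ge) \<subseteq> edges ?L"
    proof -
      have "(Inl g, f1) \<in> edges ?L" using g sub ef sf1 by (auto simp: tcomp_mem tid_def)
      moreover have "?m f \<in> edges ?L" if f: "f \<in> set fs" for f
        using fsI[OF f] sub ef f by (auto simp: tcomp_mem tid_def)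
      ultimately show ?thesis unfolding pe by auto
    qed
    have "successively (lnk ?L) (map ?m fs)" unfolding successively_map
    proof (rule successively_mono[of "lnk F" fs])
      show "successively (lnk F) fs" using su ef by (auto simp: successively_Cons)
      fix x y assume xy: "x \<in> set fs" "y \<in> set fs" "lnk F x y"
      then show "lnk ?L (?m x) (?m y)" using fsI[OF xy(2)] by (auto simp: lnk_def tid_def)
    qed
    moreover have "fs = [] \<or> lnk ?L (Inl g, f1) (?m (hd fs))"
    proof (cases fs)
      case (Cons f2 fs')
      then have "lnk F f1 f2" using su ef by simp
      then show ?thesis using Cons fsI[of f2] by (auto simp: lnk_def tid_def)
    qed simp
    ultimately have "successively (lnk ?L) (\<psi> ge)" unfolding pe
      by (cases fs) (auto simp: successively_Cons)
    moreover have "tgt ?L (last (\<psi> ge)) = tgt F (last es)"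
      unfolding pe ef by (cases fs rule: rev_cases) (auto simp: last_map)
    ultimately show "\<psi> ge \<in> edges (ttrace ?L)"
      using mem lt unfolding edges_ttrace by (auto simp: pe tid_def)
  qed
qed


lemma succ_succ: "successively P (xs @ [x]) \<Longrightarrow> y \<in> set xs \<Longrightarrow> \<exists>z. P y z"
  by (induction xs) (auto simp: successively_Cons successively_append_iff)

lemma T_nat_out:
  fixes H :: "('h, 'b, 'b2, 'w::monoid_mult) trisk" and F :: "('f, 'a + 'u, 'b + 'u, 'w) trisk" and U :: "'u set"
  assumes F: "thom k F (A <+> U) (B <+> U)" and H: "thom k H B B'"
  shows "tiso (ttrace (tcomp F (tsum H (tid U)))) (tcomp (ttrace F) H)"
proof -
  let ?L = "tcomp F (tsum H (tid U))"
  have Ft: "\<And>e. e \<in> edges F \<Longrightarrow> tgt F e \<in> B <+> U" using thomD(4)[OF F] .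
  have struct: "\<exists>h fk qs. ps = qs @ [(fk, Inl h)] \<and> h \<in> edges H \<and> fk \<in> edges F \<and> tgt F fk = Inl (src H h) \<and>
     (\<forall>p\<in>set qs. fst p \<in> edges F \<and> snd p = Inr (projr (tgt F (fst p))) \<and> \<not> isl (tgt F (fst p)))"
    if ps: "ps \<in> edges (ttrace ?L)" for ps
  proof -
    from ps have ne: "ps \<noteq> []" and sub: "set ps \<subseteq> edges ?L" and hs: "isl (tgt ?L (last ps))"
      and su: "successively (lnk ?L) ps" by (auto simp: edges_ttrace)
    obtain s1 f1 qs where pe: "ps = qs @ [(f1, s1)]" using ne by (metis rev_exhaust prod.exhaust)
    have m1: "(f1, s1) \<in> edges ?L" using sub pe by auto
    then have s1: "s1 \<in> edges H <+> U" "f1 \<in> edges F" "tgt F f1 = map_sum (src H) id s1"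
      by (auto simp: tcomp_mem tid_def)
    from hs pe have "isl (map_sum (tgt H) id s1)" by (simp add: tid_def)
    then obtain h where g: "s1 = Inl h" by (cases s1) auto
    have "\<forall>p\<in>set qs. fst p \<in> edges F \<and> snd p = Inr (projr (tgt F (fst p))) \<and> \<not> isl (tgt F (fst p))"
    proof
      fix p assume p: "p \<in> set qs"
      obtain s f where sf: "p = (f, s)" by (cases p)
      obtain z where "lnk ?L p z" using succ_succ[of "lnk ?L" qs "(f1,s1)" p] su pe p by auto
      then obtain u where u: "map_sum (tgt H) id s = Inr u" by (auto simp: lnk_def sf tid_def)
      then have su': "s = Inr u" by (cases s) auto
      have "(f, s) \<in> edges ?L" using sub pe p sf by auto
      then have "f \<in> edges F" "tgt F f = map_sum (src H) id s" by (auto simp: tcomp_mem tid_def)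
      then have "tgt F f = Inr u" "f \<in> edges F" using su' by auto
      then show "fst p \<in> edges F \<and> snd p = Inr (projr (tgt F (fst p))) \<and> \<not> isl (tgt F (fst p))"
        using su' sf by simp
    qed
    then show ?thesis using pe g s1 by auto
  qed
  define \<phi> :: "('f \<times> ('h + 'u)) list \<Rightarrow> 'f list \<times> 'h" where "\<phi> = (\<lambda>ps. (map fst ps, projl (snd (last ps))))"
  define \<psi> :: "'f list \<times> 'h \<Rightarrow> ('f \<times> ('h + 'u)) list" where
    "\<psi> = (\<lambda>(es, h). map (\<lambda>f. (f, Inr (projr (tgt F f)))) (butlast es) @ [(last es, Inl h)])"
  show ?thesis
  proof (rule tisoI[of _ _ \<phi> \<psi>])
    show "dom_set (ttrace ?L) = dom_set (tcomp (ttrace F) H)"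
      by (auto simp: dom_ttrace)
    show "cod_set (ttrace ?L) = cod_set (tcomp (ttrace F) H)"
      by (auto simp: cod_ttrace tid_def)
  next
    fix ps assume ps: "ps \<in> edges (ttrace ?L)"
    obtain h fk qs where S: "ps = qs @ [(fk, Inl h)]" "h \<in> edges H" "fk \<in> edges F" "tgt F fk = Inl (src H h)"
      "\<forall>p\<in>set qs. fst p \<in> edges F \<and> snd p = Inr (projr (tgt F (fst p))) \<and> \<not> isl (tgt F (fst p))"
      using struct[OF ps] by blast
    from ps have sub: "set ps \<subseteq> edges ?L" and su: "successively (lnk ?L) ps" and lt: "isl (src ?L (hd ps))"
      by (auto simp: edges_ttrace)
    have qs_eq: "map (\<lambda>f. (f, Inr (projr (tgt F f)))) (map fst qs) = qs"
      using S(5) by (induction qs) auto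
    have "successively (lnk F) (map fst ps)" unfolding successively_map
    proof (rule successively_mono[OF su])
      fix x y assume xy: "x \<in> set ps" "y \<in> set ps" "lnk ?L x y"
      obtain s f where y: "y = (f, s)" by (cases y)
      obtain s' f' where x: "x = (f', s')" by (cases x)
      from xy(3) obtain u where u: "src F f = Inr u" "map_sum (tgt H) id s' = Inr u"
        by (auto simp: lnk_def x y tid_def)
      then have "s' = Inr u" by (cases s') auto
      moreover have "tgt F f' = map_sum (src H) id s'" using sub xy(1) x by (auto simp: tcomp_mem tid_def)
      ultimately show "lnk F (fst x) (fst y)" using u by (simp add: lnk_def x y)
    qed
    moreover have lm: "hd (map fst ps) = fst (hd ps)" using S(1) by (cases qs) simp_all
    moreover have "isl (src F (fst (hd ps)))" using lt by (cases "hd ps") simp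
    ultimately show "\<phi> ps \<in> edges (tcomp (ttrace F) H)"
      using S sub unfolding \<phi>_def by (auto simp: tcomp_mem edges_ttrace tgt_ttrace)
    show "\<psi> (\<phi> ps) = ps" unfolding \<phi>_def \<psi>_def using S(1) qs_eq by simp
    show "tgt (tcomp (ttrace F) H) (\<phi> ps) = tgt (ttrace ?L) ps"
      unfolding \<phi>_def using S(1) by (simp add: tgt_ttrace tid_def)
    show "src (tcomp (ttrace F) H) (\<phi> ps) = src (ttrace ?L) ps"
      unfolding \<phi>_def using lm by (cases "hd ps") (simp add: src_ttrace)
    have "map (wt ?L) qs = map (wt F \<circ> fst) qs" using S(5) by (induction qs) (auto simp: tid_def)
    then have "prod_list (map (wt ?L) qs) = prod_list (map (wt F \<circ> fst) qs)" by (rule arg_cong)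
    then show "wt (tcomp (ttrace F) H) (\<phi> ps) = wt (ttrace ?L) ps"
      unfolding \<phi>_def using S(1) by (simp add: wt_ttrace tid_def mult.assoc)
  next
    fix ge assume ge: "ge \<in> edges (tcomp (ttrace F) H)"
    obtain h es where gp: "ge = (es, h)" by (cases ge)
    from ge have g: "h \<in> edges H" and es: "es \<in> edges (ttrace F)" and gt: "src H h = projl (tgt F (last es))"
      by (auto simp: gp tcomp_mem tgt_ttrace)
    from es have ne: "es \<noteq> []" and sub: "set es \<subseteq> edges F" and hs: "isl (tgt F (last es))"
      and su: "successively (lnk F) es" and lt: "isl (src F (hd es))" by (auto simp: edges_ttrace)
    obtain f1 fs where ef: "es = fs @ [f1]" using ne by (cases es rule: rev_cases) auto
    have sf1: "tgt F f1 = Inl (src H h)" using hs gt ef by (cases "tgt F f1") auto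
    have fsI: "\<And>f. f \<in> set fs \<Longrightarrow> \<exists>u. tgt F f = Inr u \<and> u \<in> U"
    proof -
      fix f assume f: "f \<in> set fs"
      obtain z where "lnk F f z" using succ_succ[of "lnk F" fs f1 f] su ef f by auto
      then obtain u where u: "tgt F f = Inr u" by (auto simp: lnk_def)
      have "f \<in> edges F" using sub ef f by auto
      then have "tgt F f \<in> B <+> U" using Ft by blast
      then show "\<exists>u. tgt F f = Inr u \<and> u \<in> U" using u by auto
    qed
    let ?m = "\<lambda>f. (f, Inr (projr (tgt F f)))"
    have pe: "\<psi> ge = map ?m fs @ [(f1, Inl h)]" unfolding \<psi>_def gp ef by simp
    show "\<phi> (\<psi> ge) = ge" unfolding \<phi>_def pe by (simp add: gp ef comp_def)
    have mem: "set (\<psi> ge) \<subseteq> edges ?L"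
    proof -
      have "(f1, Inl h) \<in> edges ?L" using g sub ef sf1 by (auto simp: tcomp_mem tid_def)
      moreover have "?m f \<in> edges ?L" if f: "f \<in> set fs" for f
        using fsI[OF f] sub ef f by (auto simp: tcomp_mem tid_def)
      ultimately show ?thesis unfolding pe by auto
    qed
    have "successively (lnk ?L) (map ?m fs)" unfolding successively_map
    proof (rule successively_mono[of "lnk F" fs])
      show "successively (lnk F) fs" using su ef by (auto simp: successively_append_iff)
      fix x y assume xy: "x \<in> set fs" "y \<in> set fs" "lnk F x y"
      then show "lnk ?L (?m x) (?m y)" using fsI[OF xy(1)] by (auto simp: lnk_def tid_def)
    qed
    moreover have "fs = [] \<or> lnk ?L (?m (last fs)) (f1, Inl h)"
    proof (cases fs rule: rev_cases)
      case (snoc fs' f2)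
      then have "lnk F f2 f1" using su ef by (simp add: successively_append_iff)
      then show ?thesis using snoc fsI[of f2] by (auto simp: lnk_def tid_def)
    qed simp
    ultimately have "successively (lnk ?L) (\<psi> ge)" unfolding pe
      by (cases fs rule: rev_cases) (auto simp: successively_append_iff last_map)
    moreover have "src ?L (hd (\<psi> ge)) = src F (hd es)"
      unfolding pe ef by (cases fs) auto
    ultimately show "\<psi> ge \<in> edges (ttrace ?L)"
      using mem lt unfolding edges_ttrace by (auto simp: pe tid_def)
  qed
qed


lemma T_yank: "tiso (ttrace (tswap U U) :: (_, _, _, 'w::monoid_mult) trisk) (tid U)"
proof -
  have struct: "\<exists>u. u \<in> U \<and> es = [Inl u, Inr u]" if es: "es \<in> edges (ttrace (tswap U U) :: (_, _, _, 'w) trisk)" for es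
  proof -
    from es have ne: "es \<noteq> []" and sub: "set es \<subseteq> U <+> U" and hs: "isl (hd es)"
      and su: "successively (lnk (tswap U U :: (_, _, _, 'w) trisk)) es" and lt: "isl (case_sum Inr Inl (last es) :: _ + _)"
      by (auto simp: edges_ttrace tswap_def)
    obtain e1 rest where e: "es = e1 # rest" using ne by (cases es) auto
    obtain u where u: "e1 = Inl u" using hs e by (cases e1) auto
    have uU: "u \<in> U" using sub e u by auto
    obtain e2 rest' where r: "rest = e2 # rest'" using lt e u by (cases rest) auto
    have "lnk (tswap U U :: (_, _, _, 'w) trisk) e1 e2" using su e r by simp
    then have e2: "e2 = Inr u" using u by (auto simp: lnk_def tswap_def)
    have "rest' = []"
    proof (rule ccontr)
      assume "rest' \<noteq> []"
      then obtain e3 r3 where "rest' = e3 # r3" by (cases rest') auto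
      then have "lnk (tswap U U :: (_, _, _, 'w) trisk) e2 e3" using su e r by simp
      then show False using e2 by (auto simp: lnk_def tswap_def)
    qed
    then show ?thesis using e u e2 r uU by auto
  qed
  show ?thesis
  proof (rule tisoI[of _ _ "\<lambda>es. projl (hd es)" "\<lambda>u. [Inl u, Inr u]"])
    fix es assume es: "es \<in> edges (ttrace (tswap U U) :: (_, _, _, 'w) trisk)"
    then obtain u where "u \<in> U" "es = [Inl u, Inr u]" using struct by blast
    then show "projl (hd es) \<in> edges (tid U :: (_, _, _, 'w) trisk)" "[Inl (projl (hd es)), Inr (projl (hd es))] = es"
      "src (tid U :: (_, _, _, 'w) trisk) (projl (hd es)) = src (ttrace (tswap U U)) es"
      "tgt (tid U :: (_, _, _, 'w) trisk) (projl (hd es)) = tgt (ttrace (tswap U U)) es"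
      "wt (tid U :: (_, _, _, 'w) trisk) (projl (hd es)) = wt (ttrace (tswap U U)) es"
      by (auto simp: tid_def tswap_def src_ttrace tgt_ttrace wt_ttrace)
  next
    fix u assume "u \<in> edges (tid U :: (_, _, _, 'w) trisk)"
    then show "[Inl u, Inr u] \<in> edges (ttrace (tswap U U) :: (_, _, _, 'w) trisk)"
      by (auto simp: tid_def tswap_def edges_ttrace lnk_def)
  qed (auto simp: tid_def tswap_def dom_ttrace cod_ttrace)
qed

lemma T_van0:
  assumes F: "thom k F (A <+> {}) (B <+> {})"
  shows "tiso (ttrace F) (tcomp (tcomp (trunit_inv A) F) (trunit B))"
proof -
  have Fs: "\<And>e. e \<in> edges F \<Longrightarrow> src F e \<in> A <+> {}" "\<And>e. e \<in> edges F \<Longrightarrow> tgt F e \<in> B <+> {}"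
    using thomD[OF F] by auto
  have struct: "\<exists>f. es = [f] \<and> f \<in> edges F" if es: "es \<in> edges (ttrace F)" for es
  proof -
    from es have ne: "es \<noteq> []" and sub: "set es \<subseteq> edges F" and su: "successively (lnk F) es"
      by (auto simp: edges_ttrace)
    obtain f rest where e: "es = f # rest" using ne by (cases es) auto
    have "rest = []"
    proof (rule ccontr)
      assume "rest \<noteq> []"
      then obtain e3 r3 where "rest = e3 # r3" by (cases rest) auto
      then have "lnk F f e3" using su e by simp
      then obtain u where "tgt F f = Inr u" by (auto simp: lnk_def)
      moreover have "f \<in> edges F" using sub e by auto
      ultimately show False using Fs(2) by fastforce
    qed
    then show ?thesis using e sub by auto
  qed
  have E: "es \<in> edges (ttrace F) \<longleftrightarrow> (\<exists>f a b. es = [f] \<and> f \<in> edges F \<and> src F f = Inl a \<and> tgt F f = Inl b \<and> a \<in> A \<and> b \<in> B)" for es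
  proof
    assume es: "es \<in> edges (ttrace F)"
    then obtain f where f: "es = [f]" "f \<in> edges F" using struct by blast
    have i: "isl (src F f)" "isl (tgt F f)" using es f by (auto simp: edges_ttrace)
    obtain a where a: "src F f = Inl a" using i by (cases "src F f") auto
    obtain b where b: "tgt F f = Inl b" using i by (cases "tgt F f") auto
    have "a \<in> A" "b \<in> B" using Fs[OF f(2)] a b by auto
    then show "\<exists>f a b. es = [f] \<and> f \<in> edges F \<and> src F f = Inl a \<and> tgt F f = Inl b \<and> a \<in> A \<and> b \<in> B"
      using f a b by blast
  qed (auto simp: edges_ttrace)
  have P: "p \<in> edges (tcomp (tcomp (tfun A (A <+> {}) Inl) F) (tfun (B <+> {}) B projl)) \<longleftrightarrow>
     (\<exists>f a b. p = ((a, f), Inl b) \<and> f \<in> edges F \<and> src F f = Inl a \<and> tgt F f = Inl b \<and> a \<in> A \<and> b \<in> B)" for p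
  proof
    assume p: "p \<in> edges (tcomp (tcomp (tfun A (A <+> {}) Inl) F) (tfun (B <+> {}) B projl))"
    then obtain a f b where pe: "p = ((a, f), b)" "a \<in> A" "f \<in> edges F" "src F f = Inl a" "b = tgt F f"
      by (cases p) (auto simp: tcomp_mem trunit_def trunit_inv_def)
    obtain b' where b': "tgt F f = Inl b'" "b' \<in> B" using Fs(2)[OF pe(3)] by auto
    then show "\<exists>f a b. p = ((a, f), Inl b) \<and> f \<in> edges F \<and> src F f = Inl a \<and> tgt F f = Inl b \<and> a \<in> A \<and> b \<in> B"
      using pe by blast
  qed (auto simp: tcomp_mem trunit_def trunit_inv_def)
  show ?thesis unfolding trunit_def trunit_inv_def
    apply (rule tisoI[of _ _ "\<lambda>es. ((projl (src F (hd es)), hd es), tgt F (hd es))" "\<lambda>p. [snd (fst p)]"])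
    using thomD(1,2)[OF F] by (auto simp: E P dom_ttrace cod_ttrace src_ttrace tgt_ttrace wt_ttrace)
qed


lemma T_super:
  fixes G :: "('g, 'w1, 'z1, 'w::monoid_mult) trisk" and F :: "('f, 'a + 'u, 'b + 'u, 'w) trisk"
  assumes G: "thom k G W Z" and F: "thom k F (A <+> U) (B <+> U)"
  shows "tiso (ttrace (tcomp (tcomp (tassoc W A U) (tsum G F)) (tassoc_inv Z B U))) (tsum G (ttrace F))"
proof -
  define L where "L = tcomp (tcomp (tassoc W A U) (tsum G F)) (tassoc_inv Z B U)"
  define m :: "'f \<Rightarrow> ((('w1 + 'a) + 'u) \<times> ('g + 'f)) \<times> ('z1 + ('b + 'u))"
    where "m = (\<lambda>f. ((map_sum Inr id (src F f), Inr f), Inr (tgt F f)))"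
  define gG :: "'g \<Rightarrow> ((('w1 + 'a) + 'u) \<times> ('g + 'f)) \<times> ('z1 + ('b + 'u))"
    where "gG = (\<lambda>g. ((Inl (Inl (src G g)), Inl g), Inl (tgt G g)))"
  have Gs: "\<And>e. e \<in> edges G \<Longrightarrow> src G e \<in> W" "\<And>e. e \<in> edges G \<Longrightarrow> tgt G e \<in> Z" using thomD[OF G] by auto
  have Fs: "\<And>e. e \<in> edges F \<Longrightarrow> src F e \<in> A <+> U" "\<And>e. e \<in> edges F \<Longrightarrow> tgt F e \<in> B <+> U" using thomD[OF F] by auto
  have Lm: "p \<in> edges L \<longleftrightarrow> (\<exists>g. g \<in> edges G \<and> p = gG g) \<or> (\<exists>f. f \<in> edges F \<and> p = m f)" for p
  proof
    assume p: "p \<in> edges L"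
    obtain x s y where pe: "p = ((x, s), y)" by (cases p) auto
    from p have x: "x \<in> (W <+> A) <+> U" and s: "s \<in> edges G <+> edges F"
      and xs: "case_sum (case_sum Inl (Inr \<circ> Inl)) (Inr \<circ> Inr) x = map_sum (src G) (src F) s"
      and ys: "y = map_sum (tgt G) (tgt F) s"
      by (auto simp: L_def pe tcomp_mem tassoc_def tassoc_inv_def)
    show "(\<exists>g. g \<in> edges G \<and> p = gG g) \<or> (\<exists>f. f \<in> edges F \<and> p = m f)"
    proof (cases s)
      case (Inl g)
      then have "x = Inl (Inl (src G g))" using xs by (auto split: sum.splits)
      then show ?thesis using Inl s ys pe by (auto simp: gG_def)
    next
      case (Inr f)
      then have "x = map_sum Inr id (src F f)" using xs by (cases "src F f"; cases x) (auto split: sum.splits)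
      then show ?thesis using Inr s ys pe by (auto simp: m_def)
    qed
  next
    assume "(\<exists>g. g \<in> edges G \<and> p = gG g) \<or> (\<exists>f. f \<in> edges F \<and> p = m f)"
    then show "p \<in> edges L"
    proof
      assume "\<exists>g. g \<in> edges G \<and> p = gG g"
      then obtain g where "g \<in> edges G" "p = gG g" by blast
      then show ?thesis using Gs[of g] by (auto simp: L_def gG_def tcomp_mem tassoc_def tassoc_inv_def)
    next
      assume "\<exists>f. f \<in> edges F \<and> p = m f"
      then obtain f where f: "f \<in> edges F" "p = m f" by blast
      show ?thesis using Fs[OF f(1)] f(2) f(1)
        by (auto simp: L_def m_def tcomp_mem tassoc_def tassoc_inv_def split: sum.splits)
    qed
  qed
  have srcL: "src L (gG g) = Inl (Inl (src G g))" "src L (m f) = map_sum Inr id (src F f)" for g f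
    by (simp_all add: L_def gG_def m_def tassoc_def)
  have tgtL: "tgt L (gG g) = Inl (Inl (tgt G g))" "tgt L (m f) = map_sum Inr id (tgt F f)" for g f
    by (simp_all add: L_def gG_def m_def tassoc_inv_def split: sum.splits)
  have wtL: "wt L (gG g) = wt G g" "wt L (m f) = wt F f" for g f
    by (simp_all add: L_def gG_def m_def tassoc_def tassoc_inv_def)
  have minj: "projr (snd (fst (m f))) = f" for f by (simp add: m_def)
  have lnkm: "lnk L (m f) (m f') \<longleftrightarrow> lnk F f f'" for f f'
    by (cases "tgt F f"; cases "src F f'") (auto simp: lnk_def tgtL srcL)
  have E: "ps \<in> edges (ttrace L) \<longleftrightarrow> (\<exists>g. g \<in> edges G \<and> ps = [gG g]) \<or> (\<exists>es. es \<in> edges (ttrace F) \<and> ps = map m es)" for ps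
  proof
    assume ps: "ps \<in> edges (ttrace L)"
    then have ne: "ps \<noteq> []" and sub: "set ps \<subseteq> edges L" and hs: "isl (src L (hd ps))"
      and su: "successively (lnk L) ps" and lt: "isl (tgt L (last ps))" by (auto simp: edges_ttrace)
    obtain p1 qs where pe: "ps = p1 # qs" using ne by (cases ps) auto
    have "p1 \<in> edges L" using sub pe by auto
    then consider (g) g where "g \<in> edges G" "p1 = gG g" | (f) f where "f \<in> edges F" "p1 = m f" using Lm by blast
    then show "(\<exists>g. g \<in> edges G \<and> ps = [gG g]) \<or> (\<exists>es. es \<in> edges (ttrace F) \<and> ps = map m es)"
    proof cases
      case g
      have "qs = []"
      proof (rule ccontr)
        assume "qs \<noteq> []"
        then obtain q r where "qs = q # r" by (cases qs) auto
        then have "lnk L p1 q" using su pe by simp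
        then show False using g by (auto simp: lnk_def tgtL)
      qed
      then show ?thesis using g pe by auto
    next
      case f
      have allm: "\<forall>p\<in>set ps. \<exists>f. f \<in> edges F \<and> p = m f"
      proof
        fix p assume p: "p \<in> set ps"
        show "\<exists>f. f \<in> edges F \<and> p = m f"
        proof (cases "p = p1")
          case True then show ?thesis using f by blast
        next
          case False
          then have "p \<in> set qs" using p pe by auto
          then obtain z where "lnk L z p" using succ_pred[of "lnk L" p1 qs p] su pe by auto
          then obtain u where u: "src L p = Inr u" by (auto simp: lnk_def)
          have "p \<in> edges L" using sub p by auto
          then consider (g') g' where "p = gG g'" | (f') f' where "f' \<in> edges F" "p = m f'" using Lm by blast
          then show ?thesis
          proof cases
            case g' then show ?thesis using u by (simp add: srcL)
          qed blast
        qed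
      qed
      define es where "es = map (\<lambda>p. projr (snd (fst p))) ps"
      have pse: "ps = map m es" unfolding es_def using allm by (induction ps) (auto simp: minj)
      have "set es \<subseteq> edges F" unfolding es_def using allm by (auto simp: minj)
      moreover have "successively (lnk F) es" using su unfolding pse successively_map lnkm .
      moreover have "es \<noteq> []" using ne pse by auto
      moreover have "isl (src F (hd es))" using hs pse \<open>es \<noteq> []\<close> by (cases "src F (hd es)") (auto simp: hd_map srcL)
      moreover have "isl (tgt F (last es))" using lt pse \<open>es \<noteq> []\<close> by (cases "tgt F (last es)") (auto simp: last_map tgtL)
      ultimately show ?thesis using pse by (auto simp: edges_ttrace)
    qed
  next
    assume "(\<exists>g. g \<in> edges G \<and> ps = [gG g]) \<or> (\<exists>es. es \<in> edges (ttrace F) \<and> ps = map m es)"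
    then show "ps \<in> edges (ttrace L)"
    proof
      assume "\<exists>g. g \<in> edges G \<and> ps = [gG g]"
      then obtain g where g: "g \<in> edges G" "ps = [gG g]" by blast
      then have "gG g \<in> edges L" using Lm by blast
      then show ?thesis using g by (auto simp: edges_ttrace srcL tgtL)
    next
      assume "\<exists>es. es \<in> edges (ttrace F) \<and> ps = map m es"
      then obtain es where es: "es \<in> edges (ttrace F)" "ps = map m es" by blast
      then have ne: "es \<noteq> []" and sub: "set es \<subseteq> edges F" and hs: "isl (src F (hd es))"
        and su: "successively (lnk F) es" and lt: "isl (tgt F (last es))" by (auto simp: edges_ttrace)
      have "m f \<in> edges L" if "f \<in> set es" for f using sub that Lm by blast
      then have "set ps \<subseteq> edges L" using es(2) by auto
      moreover have "successively (lnk L) ps" unfolding es(2) successively_map lnkm by (rule su)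
      moreover have "isl (src L (hd ps))" using hs ne es(2) by (cases "src F (hd es)") (auto simp: hd_map srcL)
      moreover have "isl (tgt L (last ps))" using lt ne es(2) by (cases "tgt F (last es)") (auto simp: last_map tgtL)
      ultimately show ?thesis using ne es(2) by (auto simp: edges_ttrace)
    qed
  qed
  have wtm: "prod_list (map (wt L) (map m es)) = prod_list (map (wt F) es)" for es
    by (induction es) (auto simp: wtL)
  have hdsrc: "es \<noteq> [] \<Longrightarrow> isl (src F (hd es)) \<Longrightarrow> projl (src L (hd (map m es))) = Inr (projl (src F (hd es)))" for es
    by (cases "src F (hd es)") (auto simp: hd_map srcL)
  have lasttgt: "es \<noteq> [] \<Longrightarrow> isl (tgt F (last es)) \<Longrightarrow> projl (tgt L (last (map m es))) = Inr (projl (tgt F (last es)))" for es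
    by (cases "tgt F (last es)") (auto simp: last_map tgtL)
  have mm: "map (\<lambda>p. projr (snd (fst p))) (map m es) = es" for es by (induction es) (auto simp: minj)
  have gGs: "snd (fst (gG g)) = Inl g" for g by (simp add: gG_def)
  have ms: "es \<noteq> [] \<Longrightarrow> snd (fst (hd (map m es))) = Inr (hd es)" for es by (cases es) (auto simp: m_def)
  have mid: "(\<lambda>p. projr (snd (fst p))) \<circ> m = id" by (simp add: fun_eq_iff minj)
  have K: "es \<in> edges (ttrace F) \<Longrightarrow> snd (fst (hd (map m es))) = Inr (hd es)"
          "es \<in> edges (ttrace F) \<Longrightarrow> projl (src L (hd (map m es))) = Inr (projl (src F (hd es)))"
          "es \<in> edges (ttrace F) \<Longrightarrow> projl (tgt L (last (map m es))) = Inr (projl (tgt F (last es)))" for es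
    using ms hdsrc lasttgt by (auto simp: edges_ttrace)
  show ?thesis unfolding L_def[symmetric]
  proof (rule tisoI[of _ _ "\<lambda>ps. case snd (fst (hd ps)) of Inl g \<Rightarrow> Inl g | Inr _ \<Rightarrow> Inr (map (\<lambda>p. projr (snd (fst p))) ps)"
        "case_sum (\<lambda>g. [gG g]) (map m)"])
    show "dom_set (ttrace L) = dom_set (tsum G (ttrace F))"
      using thomD(1)[OF G] thomD(1)[OF F] by (auto simp: L_def dom_ttrace tassoc_def)
    show "cod_set (ttrace L) = cod_set (tsum G (ttrace F))"
      using thomD(2)[OF G] thomD(2)[OF F] by (auto simp: L_def cod_ttrace tassoc_inv_def)
  qed (auto simp: E gGs K mid minj comp_def src_ttrace tgt_ttrace wt_ttrace srcL tgtL wtL wtm hdsrc lasttgt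
       split: sum.splits)
qed


fun dc1 :: "('a + 'g) \<Rightarrow> ('f \<times> ('b + 'g)) list \<Rightarrow> (('a + 'g) \<times> 'f) list" where
  "dc1 t [] = []"
| "dc1 t ((f, s) # ps) = (t, f) # dc1 (Inr (projr s)) ps"

fun dc2 :: "('f \<Rightarrow> 'b + 'v) \<Rightarrow> (('a + 'g) \<times> 'f) list \<Rightarrow> ('f \<times> ('b + 'g)) list" where
  "dc2 tf [] = []"
| "dc2 tf [(t, f)] = [(f, Inl (projl (tf f)))]"
| "dc2 tf ((t, f) # (t', f') # qs) = (f, Inr (projr t')) # dc2 tf ((t', f') # qs)"

lemma T_dinat:
  fixes F :: "('f, 'a + 'u, 'b + 'v, 'w::monoid_mult) trisk" and G :: "('g, 'v, 'u, 'w) trisk"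
  assumes F: "thom k F (A <+> U) (B <+> U')" and G: "thom k G U' U"
  shows "tiso (ttrace (tcomp F (tsum (tid B) G))) (ttrace (tcomp (tsum (tid A) G) F))"
proof -
  define L1 where "L1 = tcomp F (tsum (tid B) G)"
  define L2 where "L2 = tcomp (tsum (tid A) G) F"
  define wsA :: "('a + 'g) \<Rightarrow> 'w" where "wsA = case_sum (\<lambda>_. 1) (wt G)"
  define wsB :: "('b + 'g) \<Rightarrow> 'w" where "wsB = case_sum (\<lambda>_. 1) (wt G)"
  have Fs: "\<And>e. e \<in> edges F \<Longrightarrow> src F e \<in> A <+> U" "\<And>e. e \<in> edges F \<Longrightarrow> tgt F e \<in> B <+> U'"
    using thomD[OF F] by auto
  have E1: "(f, s) \<in> edges L1 \<longleftrightarrow> f \<in> edges F \<and> s \<in> B <+> edges G \<and> tgt F f = map_sum id (src G) s" for f s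
    by (simp add: L1_def tcomp_mem tid_def)
  have E2: "(t, f) \<in> edges L2 \<longleftrightarrow> t \<in> A <+> edges G \<and> f \<in> edges F \<and> map_sum id (tgt G) t = src F f" for f t
    by (simp add: L2_def tcomp_mem tid_def)
  have S1: "src L1 (f, s) = src F f" "tgt L1 (f, s) = map_sum id (tgt G) s" "wt L1 (f, s) = wt F f * wsB s" for f s
    by (simp_all add: L1_def tid_def wsB_def)
  have S2: "src L2 (t, f) = map_sum id (src G) t" "tgt L2 (t, f) = tgt F f" "wt L2 (t, f) = wsA t * wt F f" for f t
    by (simp_all add: L2_def tid_def wsA_def)
  have K1: "lnk L1 (f, s) (f', s') \<longleftrightarrow> (\<exists>u. map_sum id (tgt G) s = Inr u \<and> src F f' = Inr u)" for f s f' s'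
    by (simp add: lnk_def S1)
  have K2: "lnk L2 (t, f) (t', f') \<longleftrightarrow> (\<exists>u. tgt F f = Inr u \<and> map_sum id (src G) t' = Inr u)" for f t f' t'
    by (simp add: lnk_def S2)
  have fwd: "set (dc1 t ps) \<subseteq> edges L2 \<and> successively (lnk L2) (dc1 t ps) \<and>
      projl (tgt F (snd (last (dc1 t ps)))) = projl (tgt L1 (last ps)) \<and> isl (tgt F (snd (last (dc1 t ps)))) \<and> isl (tgt L1 (last ps)) \<and>
      dc2 (tgt F) (dc1 t ps) = ps \<and> wsA t * prod_list (map (wt L1) ps) = prod_list (map (wt L2) (dc1 t ps))"
    if "ps \<noteq> []" "set ps \<subseteq> edges L1" "successively (lnk L1) ps" "isl (tgt L1 (last ps))"
       "t \<in> A <+> edges G" "map_sum id (tgt G) t = src F (fst (hd ps))" for t ps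
    using that
  proof (induction ps arbitrary: t rule: induct_list012)
    case 1 then show ?case by simp
  next
    case (2 p)
    obtain f s where p: "p = (f, s)" by (cases p)
    from 2 p have "isl (map_sum id (tgt G) s)" by (simp add: S1)
    then obtain b where s: "s = Inl b" by (cases s) auto
    have m: "(f, s) \<in> edges L1" using 2 p by simp
    then have tf: "tgt F f = Inl b" using s E1 by simp
    have "(t, f) \<in> edges L2" using 2 p m E1 E2 by auto
    then show ?case using p s tf by (simp add: S1 S2 wsA_def wsB_def)
  next
    case (3 p q ps)
    obtain f s where p: "p = (f, s)" by (cases p)
    obtain f' s' where q: "q = (f', s')" by (cases q)
    from 3 p q have "lnk L1 (f, s) (f', s')" by simp
    then obtain u where u: "map_sum id (tgt G) s = Inr u" "src F f' = Inr u" using K1 by blast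
    then obtain g where s: "s = Inr g" by (cases s) auto
    have m: "(f, s) \<in> edges L1" using 3 p by simp
    then have g: "g \<in> edges G" "tgt F f = Inr (src G g)" using s E1 by auto
    have u': "u = tgt G g" using u s by simp
    have P1: "q # ps \<noteq> []" by simp
    have P2: "set (q # ps) \<subseteq> edges L1" using "3.prems"(2) by simp
    have P3: "successively (lnk L1) (q # ps)" using "3.prems"(3) by (simp add: successively_Cons)
    have P4: "isl (tgt L1 (last (q # ps)))" using "3.prems"(4) by simp
    have P5: "(Inr g :: 'a + 'g) \<in> A <+> edges G" using g by simp
    have P6: "map_sum id (tgt G) (Inr g :: 'a + 'g) = src F (fst (hd (q # ps)))" using u u' q by simp
    note IH = "3.IH"(2)[of "Inr g", OF P1 P2 P3 P4 P5 P6]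
    define R where "R = dc1 (Inr g :: 'a + 'g) (q # ps)"
    have Rh: "hd R = (Inr g, f')" "R \<noteq> []" using q by (simp_all add: R_def)
    have Rc: "R = (Inr g, f') # tl R" using Rh by (cases R) auto
    have d: "dc1 t (p # q # ps) = (t, f) # R" using p s by (simp add: R_def)
    have IH': "set R \<subseteq> edges L2" "successively (lnk L2) R"
      "projl (tgt F (snd (last R))) = projl (tgt L1 (last (q # ps)))" "isl (tgt F (snd (last R)))"
      "isl (tgt L1 (last (q # ps)))" "dc2 (tgt F) R = q # ps"
      "wsA (Inr g) * prod_list (map (wt L1) (q # ps)) = prod_list (map (wt L2) R)"
      using IH unfolding R_def[symmetric] by auto
    have tm: "(t, f) \<in> edges L2" using 3 p m E1 E2 by auto
    have lk: "lnk L2 (t, f) (Inr g, f')" using g K2 by simp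
    have c2: "dc2 (tgt F) ((t, f) # R) = (f, Inr g) # dc2 (tgt F) R"
    proof -
      have "dc2 (tgt F) ((t, f) # (Inr g, f') # tl R) = (f, Inr g) # dc2 (tgt F) ((Inr g, f') # tl R)" by simp
      then show ?thesis using Rc by metis
    qed
    have w: "wsA t * (wt L1 p * x) = (wsA t * wt F f) * (wsA (Inr g) * x)" for x
      using p s by (simp add: S1 wsA_def wsB_def mult.assoc)
    show ?case unfolding d
    proof (intro conjI)
      show "set ((t, f) # R) \<subseteq> edges L2" using IH' tm by simp
      show "successively (lnk L2) ((t, f) # R)" using IH'(2) lk Rh by (simp add: successively_Cons)
      show "projl (tgt F (snd (last ((t, f) # R)))) = projl (tgt L1 (last (p # q # ps)))" using IH'(3) Rh by simp
      show "isl (tgt F (snd (last ((t, f) # R))))" using IH'(4) Rh by simp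
      show "isl (tgt L1 (last (p # q # ps)))" using IH'(5) by simp
      show "dc2 (tgt F) ((t, f) # R) = p # q # ps" using c2 IH'(6) p s by simp
      show "wsA t * prod_list (map (wt L1) (p # q # ps)) = prod_list (map (wt L2) ((t, f) # R))"
        using IH'(7) w by (simp add: S2)
    qed
  qed
  have bwd: "set (dc2 (tgt F) qs) \<subseteq> edges L1 \<and> successively (lnk L1) (dc2 (tgt F) qs) \<and>
      isl (tgt L1 (last (dc2 (tgt F) qs))) \<and> dc1 (fst (hd qs)) (dc2 (tgt F) qs) = qs \<and>
      dc2 (tgt F) qs \<noteq> [] \<and> fst (hd (dc2 (tgt F) qs)) = snd (hd qs)"
    if "qs \<noteq> []" "set qs \<subseteq> edges L2" "successively (lnk L2) qs" "isl (tgt L2 (last qs))" for qs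
    using that
  proof (induction qs rule: induct_list012)
    case 1 then show ?case by simp
  next
    case (2 p)
    obtain t f where p: "p = (t, f)" by (cases p)
    have m: "(t, f) \<in> edges L2" using 2 p by simp
    then have f: "f \<in> edges F" using E2 by simp
    from 2 p obtain b where b: "tgt F f = Inl b" by (cases "tgt F f") (auto simp: S2)
    have "b \<in> B" using Fs(2)[OF f] b by auto
    then show ?case using p b f by (simp add: E1 S1)
  next
    case (3 p q qs)
    obtain t f where p: "p = (t, f)" by (cases p)
    obtain t' f' where q: "q = (t', f')" by (cases q)
    from 3 p q have "lnk L2 (t, f) (t', f')" by simp
    then obtain u where u: "tgt F f = Inr u" "map_sum id (src G) t' = Inr u" using K2 by blast
    then obtain g where t': "t' = Inr g" by (cases t') auto
    have mq: "(t', f') \<in> edges L2" using 3 q by simp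
    then have g: "g \<in> edges G" "src F f' = Inr (tgt G g)" using t' E2 by auto
    have mp: "(t, f) \<in> edges L2" using 3 p by simp
    then have f: "f \<in> edges F" using E2 by simp
    have Q1: "q # qs \<noteq> []" by simp
    have Q2: "set (q # qs) \<subseteq> edges L2" using "3.prems"(2) by simp
    have Q3: "successively (lnk L2) (q # qs)" using "3.prems"(3) by (simp add: successively_Cons)
    have Q4: "isl (tgt L2 (last (q # qs)))" using "3.prems"(4) by simp
    note IH = "3.IH"(2)[OF Q1 Q2 Q3 Q4]
    obtain r rs where r: "dc2 (tgt F) (q # qs) = r # rs" using IH by (cases "dc2 (tgt F) (q # qs)") auto
    have rf: "fst r = f'" using IH r q by simp
    have d: "dc2 (tgt F) (p # q # qs) = (f, Inr g) # r # rs" using p q t' r by simp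
    have m1: "(f, Inr g) \<in> edges L1" using f g u t' E1 by auto
    have lk: "lnk L1 (f, Inr g) r" using g rf by (cases r) (auto simp: K1)
    have c: "dc1 t ((f, Inr g) # r # rs) = (t, f) # dc1 (Inr g) (r # rs)" by simp
    have "dc1 (Inr g) (r # rs) = q # qs" using IH r q t' by simp
    then show ?case using IH d m1 lk p r by (simp add: successively_Cons)
  qed
  show ?thesis unfolding L1_def[symmetric] L2_def[symmetric]
  proof (rule tisoI[of _ _ "\<lambda>ps. dc1 (Inl (projl (src F (fst (hd ps))))) ps" "dc2 (tgt F)"])
    show "dom_set (ttrace L1) = dom_set (ttrace L2)" using thomD(1)[OF F]
      by (auto simp: L1_def L2_def dom_ttrace tid_def)
    show "cod_set (ttrace L1) = cod_set (ttrace L2)" using thomD(2)[OF F]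
      by (auto simp: L1_def L2_def cod_ttrace tid_def)
  next
    fix ps assume ps: "ps \<in> edges (ttrace L1)"
    then have ne: "ps \<noteq> []" and sub: "set ps \<subseteq> edges L1" and hs: "isl (src L1 (hd ps))"
      and su: "successively (lnk L1) ps" and lt: "isl (tgt L1 (last ps))" by (auto simp: edges_ttrace)
    obtain f s ps' where pe: "ps = (f, s) # ps'" using ne by (metis list.exhaust prod.exhaust)
    have f: "f \<in> edges F" using sub pe E1 by auto
    obtain a where a: "src F f = Inl a" using hs pe by (cases "src F f") (auto simp: S1)
    have aA: "a \<in> A" using Fs(1)[OF f] a by auto
    let ?t = "Inl a :: 'a + 'g"
    have tt: "Inl (projl (src F (fst (hd ps)))) = ?t" using pe a by simp
    have R: "set (dc1 ?t ps) \<subseteq> edges L2 \<and> successively (lnk L2) (dc1 ?t ps) \<and>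
      projl (tgt F (snd (last (dc1 ?t ps)))) = projl (tgt L1 (last ps)) \<and> isl (tgt F (snd (last (dc1 ?t ps)))) \<and> isl (tgt L1 (last ps)) \<and>
      dc2 (tgt F) (dc1 ?t ps) = ps \<and> wsA ?t * prod_list (map (wt L1) ps) = prod_list (map (wt L2) (dc1 ?t ps))"
      by (rule fwd) (use ne sub su lt aA a pe in auto)
    have hd1: "hd (dc1 ?t ps) = (?t, f)" using pe by simp
    have ne1: "dc1 ?t ps \<noteq> []" using pe by simp
    have tl2: "tgt L2 (last (dc1 ?t ps)) = tgt F (snd (last (dc1 ?t ps)))" by (cases "last (dc1 ?t ps)") (simp add: S2)
    show "dc1 (Inl (projl (src F (fst (hd ps))))) ps \<in> edges (ttrace L2)"
      unfolding tt using R hd1 ne1 tl2 by (auto simp: edges_ttrace S2 S1)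
    show "dc2 (tgt F) (dc1 (Inl (projl (src F (fst (hd ps))))) ps) = ps" unfolding tt using R by simp
    show "src (ttrace L2) (dc1 (Inl (projl (src F (fst (hd ps))))) ps) = src (ttrace L1) ps"
      unfolding tt using hd1 pe a by (simp add: src_ttrace S1 S2)
    show "tgt (ttrace L2) (dc1 (Inl (projl (src F (fst (hd ps))))) ps) = tgt (ttrace L1) ps"
      unfolding tt using R ne1 by (cases "last (dc1 ?t ps)") (simp add: tgt_ttrace S2)
    show "wt (ttrace L2) (dc1 (Inl (projl (src F (fst (hd ps))))) ps) = wt (ttrace L1) ps"
      unfolding tt using R by (simp add: wt_ttrace wsA_def wsB_def)
  next
    fix qs assume qs: "qs \<in> edges (ttrace L2)"
    then have ne: "qs \<noteq> []" and sub: "set qs \<subseteq> edges L2" and hs: "isl (src L2 (hd qs))"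
      and su: "successively (lnk L2) qs" and lt: "isl (tgt L2 (last qs))" by (auto simp: edges_ttrace)
    have R: "set (dc2 (tgt F) qs) \<subseteq> edges L1 \<and> successively (lnk L1) (dc2 (tgt F) qs) \<and>
      isl (tgt L1 (last (dc2 (tgt F) qs))) \<and> dc1 (fst (hd qs)) (dc2 (tgt F) qs) = qs \<and>
      dc2 (tgt F) qs \<noteq> [] \<and> fst (hd (dc2 (tgt F) qs)) = snd (hd qs)"
      by (rule bwd) (use ne sub su lt in auto)
    obtain t f qs' where qe: "qs = (t, f) # qs'" using ne by (metis list.exhaust prod.exhaust)
    obtain a where a: "t = Inl a" using hs qe by (cases t) (auto simp: S2)
    have "(t, f) \<in> edges L2" using sub qe by auto
    then have sf: "src F f = Inl a" using a E2 by simp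
    have hsrc: "isl (src L1 (hd (dc2 (tgt F) qs)))" using R qe sf
      by (cases "hd (dc2 (tgt F) qs)") (simp add: S1)
    show "dc2 (tgt F) qs \<in> edges (ttrace L1)" using R hsrc by (simp add: edges_ttrace)
    have "Inl (projl (src F (fst (hd (dc2 (tgt F) qs))))) = fst (hd qs)" using R qe sf a by simp
    then show "dc1 (Inl (projl (src F (fst (hd (dc2 (tgt F) qs)))))) (dc2 (tgt F) qs) = qs"
      using R by simp
  qed
qed


fun grp :: "('a \<Rightarrow> bool) \<Rightarrow> 'a list \<Rightarrow> 'a list list" where
  "grp Q [] = []"
| "grp Q (x # xs) = (if Q x then [x] # grp Q xs else (case grp Q xs of [] \<Rightarrow> [[x]] | l # ls \<Rightarrow> (x # l) # ls))"

lemma concat_grp: "concat (grp Q xs) = xs"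
  by (induction xs) (auto split: list.splits)

lemma grp_ne: "xs \<noteq> [] \<Longrightarrow> grp Q xs \<noteq> []"
  using concat_grp[of Q xs] by auto

lemma grp_props: "xs = [] \<or> Q (last xs) \<Longrightarrow> l \<in> set (grp Q xs) \<Longrightarrow> l \<noteq> [] \<and> Q (last l) \<and> (\<forall>x\<in>set (butlast l). \<not> Q x)"
proof (induction xs arbitrary: l)
  case Nil then show ?case by simp
next
  case (Cons x xs)
  show ?case
  proof (cases "Q x")
    case True
    have h: "xs = [] \<or> Q (last xs)" using Cons.prems(1) by (cases xs) auto
    show ?thesis using Cons.prems(2) Cons.IH[OF h] True by auto
  next
    case False
    then have xs: "xs \<noteq> []" using Cons.prems(1) by auto
    then have h: "xs = [] \<or> Q (last xs)" using Cons.prems(1) by auto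
    obtain l0 ls where g: "grp Q xs = l0 # ls" using grp_ne[OF xs] by (cases "grp Q xs") auto
    have l0: "l0 \<noteq> [] \<and> Q (last l0) \<and> (\<forall>x\<in>set (butlast l0). \<not> Q x)" using Cons.IH[OF h, of l0] g by simp
    have "grp Q (x # xs) = (x # l0) # ls" using False g by simp
    then show ?thesis using Cons.prems(2) l0 Cons.IH[OF h] g False by (auto)
  qed
qed

lemma grp_app: "l \<noteq> [] \<Longrightarrow> Q (last l) \<Longrightarrow> (\<forall>x\<in>set (butlast l). \<not> Q x) \<Longrightarrow> grp Q (l @ rest) = l # grp Q rest"
proof (induction l)
  case Nil then show ?case by simp
next
  case (Cons x l)
  show ?case
  proof (cases "l = []")
    case True then show ?thesis using Cons.prems by simp
  next
    case False
    then have "\<not> Q x" using Cons.prems(3) by simp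
    moreover have "grp Q (l @ rest) = l # grp Q rest" using Cons.IH False Cons.prems by simp
    ultimately show ?thesis by simp
  qed
qed

lemma grp_concat: "(\<forall>l\<in>set ls. l \<noteq> [] \<and> Q (last l) \<and> (\<forall>x\<in>set (butlast l). \<not> Q x)) \<Longrightarrow> grp Q (concat ls) = ls"
  by (induction ls) (auto simp: grp_app)

lemma succ_concat: "(\<forall>l\<in>set ls. l \<noteq> []) \<Longrightarrow>
   successively P (concat ls) \<longleftrightarrow> (\<forall>l\<in>set ls. successively P l) \<and> successively (\<lambda>l l'. P (last l) (hd l')) ls"
proof (induction ls rule: induct_list012)
  case (3 x y zs)
  have "successively P (concat (x # y # zs)) \<longleftrightarrow> successively P x \<and> successively P (concat (y # zs)) \<and> P (last x) (hd (concat (y # zs)))"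
    using "3.prems" by (simp add: successively_append_iff)
  moreover have "hd (concat (y # zs)) = hd y" using "3.prems" by simp
  ultimately show ?case using "3.IH"(2) "3.prems" by auto
qed auto

lemma successively_mono_bl: "successively P xs \<Longrightarrow> (\<And>x y. x \<in> set (butlast xs) \<Longrightarrow> P x y \<Longrightarrow> R x y) \<Longrightarrow> successively R xs"
  by (induction xs rule: induct_list012) (auto)

lemma last_concat': "(\<forall>l\<in>set ls. l \<noteq> []) \<Longrightarrow> ls \<noteq> [] \<Longrightarrow> last (concat ls) = last (last ls)"
  by (induction ls) auto

lemma hd_concat': "(\<forall>l\<in>set ls. l \<noteq> []) \<Longrightarrow> ls \<noteq> [] \<Longrightarrow> hd (concat ls) = hd (hd ls)"
  by (cases ls) auto

lemma prod_list_concat': "prod_list (concat ls) = prod_list (map prod_list ls)"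
  by (induction ls) auto


definition reas :: "'x + ('u + 'v) \<Rightarrow> ('x + 'u) + 'v" where
  "reas = case_sum (Inl \<circ> Inl) (case_sum (Inl \<circ> Inr) Inr)"

lemma reas_simps[simp]: "reas (Inl a) = Inl (Inl a)" "reas (Inr (Inl u)) = Inl (Inr u)" "reas (Inr (Inr v)) = Inr v"
  by (simp_all add: reas_def)

lemma reas_Inr: "reas x = Inr v \<longleftrightarrow> x = Inr (Inr v)"
  by (auto simp: reas_def split: sum.splits)

lemma isl_reas: "isl (reas x) \<longleftrightarrow> \<not> (\<exists>v. x = Inr (Inr v))"
  by (auto simp: reas_def split: sum.splits)

lemma succ_pred': "successively P (x # xs) \<Longrightarrow> y \<in> set xs \<Longrightarrow> \<exists>z\<in>set (x # xs). P z y"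
  by (induction xs arbitrary: x) (auto simp: successively_Cons)

lemma succ_bl: "successively P l \<Longrightarrow> x \<in> set (butlast l) \<Longrightarrow> \<exists>y. P x y"
  by (induction l rule: induct_list012) auto

definition reH :: "('f, 'a + ('u + 'v), 'b + ('u + 'v), 'w) trisk \<Rightarrow> 'a set \<Rightarrow> 'b set \<Rightarrow> 'u set \<Rightarrow> 'v set \<Rightarrow>
    ('f, ('a + 'u) + 'v, ('b + 'u) + 'v, 'w) trisk" where
  "reH F A B U V = \<lparr> edges = edges F, dom_set = (A <+> U) <+> V, cod_set = (B <+> U) <+> V,
     src = reas \<circ> src F, tgt = reas \<circ> tgt F, wt = wt F \<rparr>"

lemma reH_simps[simp]: "edges (reH F A B U V) = edges F" "src (reH F A B U V) = reas \<circ> src F"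
  "tgt (reH F A B U V) = reas \<circ> tgt F" "wt (reH F A B U V) = wt F"
  "dom_set (reH F A B U V) = (A <+> U) <+> V" "cod_set (reH F A B U V) = (B <+> U) <+> V"
  by (simp_all add: reH_def)

lemma reH_iso: assumes F: "thom k F (A <+> (U <+> V)) (B <+> (U <+> V))"
  shows "tiso (reH F A B U V) (tcomp (tcomp (tassoc A U V) F) (tassoc_inv B U V))"
proof -
  have Fs: "\<And>e. e \<in> edges F \<Longrightarrow> src F e \<in> A <+> (U <+> V)" "\<And>e. e \<in> edges F \<Longrightarrow> tgt F e \<in> B <+> (U <+> V)"
    using thomD[OF F] by auto
  show ?thesis
    apply (rule tisoI[of _ _ "\<lambda>f. ((reas (src F f), f), tgt F f)" "\<lambda>p. snd (fst p)"])
    apply (auto simp: tcomp_mem tassoc_def tassoc_inv_def reas_def Plus_iff split: sum.splits)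
    apply (metis Fs Inl_Plus Inr_Plus)+
    done
qed


lemma T_van_main:
  fixes F :: "('f, 'a + ('u + 'v), 'b + ('u + 'v), 'w::monoid_mult) trisk"
  assumes F: "thom k F (A <+> (U <+> V)) (B <+> (U <+> V))"
  shows "tiso (ttrace F) (ttrace (ttrace (reH F A B U V)))"
proof -
  define H where "H = reH F A B U V"
  define T1 where "T1 = ttrace H"
  define Q where "Q = (\<lambda>e. \<not> (\<exists>v. tgt F e = Inr (Inr v)))"
  have lH: "lnk H e e' \<longleftrightarrow> (\<exists>v. tgt F e = Inr (Inr v) \<and> src F e' = Inr (Inr v))" for e e'
    by (auto simp: H_def lnk_def reas_Inr)
  have pr: "\<not> (\<exists>v. x = Inr (Inr v)) \<Longrightarrow> projl (reas x) = (case x of Inl a \<Rightarrow> Inl a | Inr y \<Rightarrow> Inr (projl y))" for x :: "'x + ('u + 'v)"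
    by (auto simp: reas_def split: sum.splits)
  have pr2: "\<not> (\<exists>v. x = Inr (Inr v)) \<Longrightarrow> projl (reas x) = Inr u \<Longrightarrow> x = Inr (Inl u)" for x :: "'x + ('u + 'v)" and u
    by (auto simp: reas_def split: sum.splits)
  have E1: "l \<in> edges T1 \<longleftrightarrow> l \<noteq> [] \<and> set l \<subseteq> edges F \<and> Q' (src F (hd l)) \<and> successively (lnk H) l \<and> Q (last l)"
    if "Q' = (\<lambda>x. \<not> (\<exists>v. x = Inr (Inr v)))" for l Q'
    using that by (auto simp: T1_def H_def edges_ttrace isl_reas Q_def)
  have sT1: "src T1 l = projl (reas (src F (hd l)))" "tgt T1 l = projl (reas (tgt F (last l)))" for l
    by (simp_all add: T1_def H_def src_ttrace tgt_ttrace)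
  have lT1: "lnk F (last l) (hd l')" if "lnk T1 l l'" "l \<in> edges T1" "l' \<in> edges T1" for l l'
  proof -
    from that(2) have a: "\<not> (\<exists>v. tgt F (last l) = Inr (Inr v))" by (simp add: E1[OF refl] Q_def)
    from that(3) have b: "\<not> (\<exists>v. src F (hd l') = Inr (Inr v))" by (simp add: E1[OF refl])
    from that(1) obtain u where u: "projl (reas (tgt F (last l))) = Inr u" "projl (reas (src F (hd l'))) = Inr u"
      by (auto simp: lnk_def sT1)
    have "tgt F (last l) = Inr (Inl u)" using u(1) pr2 a by blast
    moreover have "src F (hd l') = Inr (Inl u)" using u(2) pr2 b by blast
    ultimately show ?thesis by (simp add: lnk_def)
  qed
  have lT1': "lnk T1 l l'" if "lnk F (last l) (hd l')" "Q (last l)" for l l'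
  proof -
    from that obtain u where u: "tgt F (last l) = Inr u" "src F (hd l') = Inr u" by (auto simp: lnk_def)
    with that(2) obtain u' where "u = Inl u'" by (cases u) (auto simp: Q_def)
    then show ?thesis using u by (simp add: lnk_def sT1)
  qed
  show ?thesis unfolding H_def[symmetric] T1_def[symmetric]
  proof (rule tisoI[of _ _ "grp Q" concat])
    show "dom_set (ttrace F) = dom_set (ttrace T1)" using thomD(1)[OF F]
      by (auto simp: T1_def H_def dom_ttrace)
    show "cod_set (ttrace F) = cod_set (ttrace T1)" using thomD(2)[OF F]
      by (auto simp: T1_def H_def cod_ttrace)
  next
    fix es assume es: "es \<in> edges (ttrace F)"
    then have ne: "es \<noteq> []" and sub: "set es \<subseteq> edges F" and hs: "isl (src F (hd es))"
      and su: "successively (lnk F) es" and lt: "isl (tgt F (last es))" by (auto simp: edges_ttrace)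
    define ls where "ls = grp Q es"
    have qe: "Q (last es)" using lt by (auto simp: Q_def)
    have P: "\<And>l. l \<in> set ls \<Longrightarrow> l \<noteq> [] \<and> Q (last l) \<and> (\<forall>x\<in>set (butlast l). \<not> Q x)"
      using grp_props[of es Q] qe unfolding ls_def by blast
    have cc: "concat ls = es" unfolding ls_def by (rule concat_grp)
    have lsne: "ls \<noteq> []" using ne unfolding ls_def by (rule grp_ne)
    have nn: "\<forall>l\<in>set ls. l \<noteq> []" using P by blast
    have sc: "(\<forall>l\<in>set ls. successively (lnk F) l) \<and> successively (\<lambda>l l'. lnk F (last l) (hd l')) ls"
      using su succ_concat[OF nn, of "lnk F"] cc by simp
    have hh: "hd (hd ls) = hd es" using hd_concat'[OF nn lsne] cc by simp
    have ll: "last (last ls) = last es" using last_concat'[OF nn lsne] cc by simp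
    have inT1: "l \<in> edges T1" if l: "l \<in> set ls" for l
    proof -
      have lsub: "set l \<subseteq> edges F" using l sub cc by force
      have "\<not> (\<exists>v. src F (hd l) = Inr (Inr v))"
      proof (cases "l = hd ls")
        case True then show ?thesis using hh hs by auto
      next
        case False
        obtain l1 ls' where lsc: "ls = l1 # ls'" using lsne by (cases ls) auto
        then have "l \<in> set ls'" using l False by auto
        then obtain z where z: "z \<in> set ls" "lnk F (last z) (hd l)" using succ_pred'[of _ l1 ls' l] sc lsc by auto
        then obtain u where "tgt F (last z) = Inr u" "src F (hd l) = Inr u" by (auto simp: lnk_def)
        moreover have "Q (last z)" using P z(1) by blast
        ultimately show ?thesis by (auto simp: Q_def)
      qed
      moreover have "successively (lnk H) l"
      proof (rule successively_mono_bl)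
        show "successively (lnk F) l" using sc l by blast
        fix x y assume "x \<in> set (butlast l)" "lnk F x y"
        moreover have "\<not> Q x" using P l \<open>x \<in> set (butlast l)\<close> by blast
        ultimately show "lnk H x y" unfolding lH by (auto simp: lnk_def Q_def)
      qed
      ultimately show ?thesis using P[OF l] lsub by (simp add: E1[OF refl])
    qed
    have "successively (lnk T1) ls"
      by (rule successively_mono[OF conjunct2[OF sc]]) (use lT1' P in blast)
    moreover have "isl (src T1 (hd ls))" using hh hs by (cases "src F (hd es)") (auto simp: sT1)
    moreover have "isl (tgt T1 (last ls))" using ll lt by (cases "tgt F (last es)") (auto simp: sT1)
    ultimately show "grp Q es \<in> edges (ttrace T1)" using inT1 lsne unfolding ls_def[symmetric]
      by (auto simp: edges_ttrace)
    show "concat (grp Q es) = es" by (rule concat_grp)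
    show "src (ttrace T1) (grp Q es) = src (ttrace F) es" unfolding ls_def[symmetric]
      using hh hs by (cases "src F (hd es)") (auto simp: sT1 src_ttrace)
    show "tgt (ttrace T1) (grp Q es) = tgt (ttrace F) es" unfolding ls_def[symmetric]
      using ll lt by (cases "tgt F (last es)") (auto simp: sT1 tgt_ttrace)
    have "prod_list (map (wt F) es) = prod_list (map (\<lambda>l. prod_list (map (wt F) l)) ls)"
      by (subst cc[symmetric]) (simp add: map_concat prod_list_concat' comp_def)
    moreover have "wt T1 = (\<lambda>l. prod_list (map (wt F) l))" by (rule ext) (simp add: wt_ttrace T1_def H_def)
    ultimately show "wt (ttrace T1) (grp Q es) = wt (ttrace F) es" unfolding ls_def[symmetric]
      by (simp add: wt_ttrace)
  next
    fix ls assume ls: "ls \<in> edges (ttrace T1)"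
    then have lsne: "ls \<noteq> []" and lsub: "set ls \<subseteq> edges T1" and hs: "isl (src T1 (hd ls))"
      and su: "successively (lnk T1) ls" and lt: "isl (tgt T1 (last ls))" by (auto simp: edges_ttrace)
    have inl: "\<And>l. l \<in> set ls \<Longrightarrow> l \<noteq> [] \<and> set l \<subseteq> edges F \<and> \<not> (\<exists>v. src F (hd l) = Inr (Inr v)) \<and> successively (lnk H) l \<and> Q (last l)"
    proof -
      fix l assume "l \<in> set ls"
      then have "l \<in> edges T1" using lsub by blast
      then show "l \<noteq> [] \<and> set l \<subseteq> edges F \<and> \<not> (\<exists>v. src F (hd l) = Inr (Inr v)) \<and> successively (lnk H) l \<and> Q (last l)"
        by (simp add: E1[OF refl])
    qed
    have nn: "\<forall>l\<in>set ls. l \<noteq> []" using inl by blast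
    have P: "\<forall>l\<in>set ls. l \<noteq> [] \<and> Q (last l) \<and> (\<forall>x\<in>set (butlast l). \<not> Q x)"
    proof
      fix l assume l: "l \<in> set ls"
      have "\<not> Q x" if x: "x \<in> set (butlast l)" for x
      proof -
        obtain y where "lnk H x y" using succ_bl[of "lnk H" l x] inl[OF l] x by blast
        then show ?thesis by (auto simp: lH Q_def)
      qed
      then show "l \<noteq> [] \<and> Q (last l) \<and> (\<forall>x\<in>set (butlast l). \<not> Q x)" using inl[OF l] by blast
    qed
    show "grp Q (concat ls) = ls" using grp_concat[OF P] .
    have hh: "hd (concat ls) = hd (hd ls)" by (rule hd_concat'[OF nn lsne])
    have ll: "last (concat ls) = last (last ls)" by (rule last_concat'[OF nn lsne])
    have hd1: "\<not> (\<exists>v. src F (hd (hd ls)) = Inr (Inr v))" using inl[of "hd ls"] lsne by simp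
    have hsF: "isl (src F (hd (concat ls)))" using hs hd1 hh pr[OF hd1] by (auto simp: sT1 split: sum.splits)
    have ltl: "Q (last (last ls))" using inl[of "last ls"] lsne by simp
    then have ltl': "\<not> (\<exists>v. tgt F (last (last ls)) = Inr (Inr v))" by (simp add: Q_def)
    have ltF: "isl (tgt F (last (concat ls)))" using lt ltl' ll pr[OF ltl'] by (auto simp: sT1 split: sum.splits)
    have "successively (lnk F) (concat ls)"
    proof (subst succ_concat[OF nn], intro conjI ballI)
      fix l assume l: "l \<in> set ls"
      have hf: "lnk F x y" if "lnk H x y" for x y using that unfolding lH by (auto simp: lnk_def)
      have "successively (lnk H) l" using inl[OF l] by blast
      then show "successively (lnk F) l" by (rule successively_mono) (rule hf)
    next
      show "successively (\<lambda>l l'. lnk F (last l) (hd l')) ls"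
        by (rule successively_mono[OF su]) (use lT1 lsub in blast)
    qed
    moreover have "set (concat ls) \<subseteq> edges F" using inl by auto
    moreover have "concat ls \<noteq> []" using nn lsne by (cases ls) auto
    ultimately show "concat ls \<in> edges (ttrace F)" using hsF ltF by (simp add: edges_ttrace)
  qed
qed

lemma T_van:
  fixes F :: "('f, 'a + ('u + 'v), 'b + ('u + 'v), 'w::monoid_mult) trisk"
  assumes F: "thom k F (A <+> (U <+> V)) (B <+> (U <+> V))"
  shows "tiso (ttrace F) (ttrace (ttrace (tcomp (tcomp (tassoc A U V) F) (tassoc_inv B U V))))"
  by (rule tiso_trans[OF T_van_main[OF F] T_cong[OF T_cong[OF reH_iso[OF F]]]])


theorem theorem7:
  fixes k :: "'k rel"
  assumes kappa_card: "Card_order k"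
    and kappa_uncountable: "natLeq <o k"
    and Omega_small: "card_of (UNIV :: 'w::monoid_mult set) <o k"
  shows
  \<comment> \<open>category: identities, composition well defined on iso classes, unit and associativity laws\<close>
  "(\<forall>S. card_of S <o k \<longrightarrow> thom k (tid S :: (_, _, _, 'w) trisk) S S)
 \<and> (\<forall>(X :: (_, _, _, 'w) trisk) Y S T U. thom k X S T \<and> thom k Y T U \<longrightarrow> thom k (tcomp X Y) S U)
 \<and> (\<forall>(X :: (_, _, _, 'w) trisk) (X' :: (_, _, _, 'w) trisk) (Y :: (_, _, _, 'w) trisk) (Y' :: (_, _, _, 'w) trisk) S T U.
      thom k X S T \<and> thom k X' S T \<and> thom k Y T U \<and> thom k Y' T U \<and> tiso X X' \<and> tiso Y Y'
      \<longrightarrow> tiso (tcomp X Y) (tcomp X' Y'))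
 \<and> (\<forall>(X :: (_, _, _, 'w) trisk) S T. thom k X S T \<longrightarrow>
      tiso (tcomp (tid S) X) X \<and> tiso (tcomp X (tid T)) X)
 \<and> (\<forall>(X :: (_, _, _, 'w) trisk) Y Z S T U V. thom k X S T \<and> thom k Y T U \<and> thom k Z U V \<longrightarrow>
      tiso (tcomp (tcomp X Y) Z) (tcomp X (tcomp Y Z)))
  \<comment> \<open>monoidal product: bifunctor\<close>
 \<and> (\<forall>(X :: (_, _, _, 'w) trisk) (Y :: (_, _, _, 'w) trisk) S T S' T'. thom k X S T \<and> thom k Y S' T' \<longrightarrow>
      thom k (tsum X Y) (S <+> S') (T <+> T'))
 \<and> (\<forall>(X :: (_, _, _, 'w) trisk) (X' :: (_, _, _, 'w) trisk) (Y :: (_, _, _, 'w) trisk) (Y' :: (_, _, _, 'w) trisk) S T S' T'.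
      thom k X S T \<and> thom k X' S T \<and> thom k Y S' T' \<and> thom k Y' S' T' \<and> tiso X X' \<and> tiso Y Y'
      \<longrightarrow> tiso (tsum X Y) (tsum X' Y'))
 \<and> (\<forall>(X :: (_, _, _, 'w) trisk) (X' :: (_, _, _, 'w) trisk) (Y :: (_, _, _, 'w) trisk) (Y' :: (_, _, _, 'w) trisk) S T U S' T' U'.
      thom k X S T \<and> thom k X' T U \<and> thom k Y S' T' \<and> thom k Y' T' U' \<longrightarrow>
      tiso (tcomp (tsum X Y) (tsum X' Y')) (tsum (tcomp X X') (tcomp Y Y')))
 \<and> (\<forall>S S'. card_of S <o k \<and> card_of S' <o k \<longrightarrow>
      tiso (tsum (tid S) (tid S') :: (_, _, _, 'w) trisk) (tid (S <+> S')))
  \<comment> \<open>structural morphisms are morphisms and isomorphisms (unit object: the empty set)\<close>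
 \<and> (\<forall>A B C. card_of A <o k \<and> card_of B <o k \<and> card_of C <o k \<longrightarrow>
      thom k (tassoc A B C :: (_, _, _, 'w) trisk) ((A <+> B) <+> C) (A <+> (B <+> C))
    \<and> thom k (tassoc_inv A B C :: (_, _, _, 'w) trisk) (A <+> (B <+> C)) ((A <+> B) <+> C)
    \<and> tiso (tcomp (tassoc A B C) (tassoc_inv A B C) :: (_, _, _, 'w) trisk) (tid ((A <+> B) <+> C))
    \<and> tiso (tcomp (tassoc_inv A B C) (tassoc A B C) :: (_, _, _, 'w) trisk) (tid (A <+> (B <+> C))))
 \<and> (\<forall>A. card_of A <o k \<longrightarrow>
      thom k (tlunit A :: (_, _, _, 'w) trisk) ({} <+> A) A
    \<and> thom k (tlunit_inv A :: (_, _, _, 'w) trisk) A ({} <+> A)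
    \<and> tiso (tcomp (tlunit A) (tlunit_inv A) :: (_, _, _, 'w) trisk) (tid ({} <+> A))
    \<and> tiso (tcomp (tlunit_inv A) (tlunit A) :: (_, _, _, 'w) trisk) (tid A)
    \<and> thom k (trunit A :: (_, _, _, 'w) trisk) (A <+> {}) A
    \<and> thom k (trunit_inv A :: (_, _, _, 'w) trisk) A (A <+> {})
    \<and> tiso (tcomp (trunit A) (trunit_inv A) :: (_, _, _, 'w) trisk) (tid (A <+> {}))
    \<and> tiso (tcomp (trunit_inv A) (trunit A) :: (_, _, _, 'w) trisk) (tid A))
  \<comment> \<open>naturality of associator and unitors\<close>
 \<and> (\<forall>(X :: (_, _, _, 'w) trisk) (Y :: (_, _, _, 'w) trisk) (Z :: (_, _, _, 'w) trisk) A A' B B' C C'.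
      thom k X A A' \<and> thom k Y B B' \<and> thom k Z C C' \<longrightarrow>
      tiso (tcomp (tsum (tsum X Y) Z) (tassoc A' B' C')) (tcomp (tassoc A B C) (tsum X (tsum Y Z))))
 \<and> (\<forall>(X :: (_, _, _, 'w) trisk) A A'. thom k X A A' \<longrightarrow>
      tiso (tcomp (tsum (tid {}) X) (tlunit A')) (tcomp (tlunit A) X)
    \<and> tiso (tcomp (tsum X (tid {})) (trunit A')) (tcomp (trunit A) X))
  \<comment> \<open>pentagon and triangle\<close>
 \<and> (\<forall>A B C D. card_of A <o k \<and> card_of B <o k \<and> card_of C <o k \<and> card_of D <o k \<longrightarrow>
      tiso (tcomp (tassoc (A <+> B) C D) (tassoc A B (C <+> D)) :: (_, _, _, 'w) trisk)
           (tcomp (tcomp (tsum (tassoc A B C) (tid D)) (tassoc A (B <+> C) D)) (tsum (tid A) (tassoc B C D))))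
 \<and> (\<forall>A B. card_of A <o k \<and> card_of B <o k \<longrightarrow>
      tiso (tcomp (tassoc A {} B) (tsum (tid A) (tlunit B)) :: (_, _, _, 'w) trisk)
           (tsum (trunit A) (tid B)))
  \<comment> \<open>symmetry: morphism, naturality, involutive, hexagon\<close>
 \<and> (\<forall>A B. card_of A <o k \<and> card_of B <o k \<longrightarrow>
      thom k (tswap A B :: (_, _, _, 'w) trisk) (A <+> B) (B <+> A)
    \<and> tiso (tcomp (tswap A B) (tswap B A) :: (_, _, _, 'w) trisk) (tid (A <+> B)))
 \<and> (\<forall>(X :: (_, _, _, 'w) trisk) (Y :: (_, _, _, 'w) trisk) A A' B B'. thom k X A A' \<and> thom k Y B B' \<longrightarrow>
      tiso (tcomp (tsum X Y) (tswap A' B')) (tcomp (tswap A B) (tsum Y X)))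
 \<and> (\<forall>A B C. card_of A <o k \<and> card_of B <o k \<and> card_of C <o k \<longrightarrow>
      tiso (tcomp (tcomp (tassoc A B C) (tswap A (B <+> C))) (tassoc B C A) :: (_, _, _, 'w) trisk)
           (tcomp (tcomp (tsum (tswap A B) (tid C)) (tassoc B A C)) (tsum (tid B) (tswap A C))))
  \<comment> \<open>trace: well defined on iso classes\<close>
 \<and> (\<forall>(F :: (_, _, _, 'w) trisk) A B U. thom k F (A <+> U) (B <+> U) \<longrightarrow> thom k (ttrace F) A B)
 \<and> (\<forall>(F :: (_, _, _, 'w) trisk) (F' :: (_, _, _, 'w) trisk) A B U.
      thom k F (A <+> U) (B <+> U) \<and> thom k F' (A <+> U) (B <+> U) \<and> tiso F F' \<longrightarrow>
      tiso (ttrace F) (ttrace F'))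
  \<comment> \<open>trace: naturality in the input and in the output\<close>
 \<and> (\<forall>(F :: (_, _, _, 'w) trisk) (G :: (_, _, _, 'w) trisk) A' A B U.
      thom k G A' A \<and> thom k F (A <+> U) (B <+> U) \<longrightarrow>
      tiso (ttrace (tcomp (tsum G (tid U)) F)) (tcomp G (ttrace F)))
 \<and> (\<forall>(F :: (_, _, _, 'w) trisk) (H :: (_, _, _, 'w) trisk) A B B' U.
      thom k F (A <+> U) (B <+> U) \<and> thom k H B B' \<longrightarrow>
      tiso (ttrace (tcomp F (tsum H (tid U)))) (tcomp (ttrace F) H))
  \<comment> \<open>trace: dinaturality (sliding)\<close>
 \<and> (\<forall>(F :: (_, _, _, 'w) trisk) (G :: (_, _, _, 'w) trisk) A B U U'.
      thom k F (A <+> U) (B <+> U') \<and> thom k G U' U \<longrightarrow>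
      tiso (ttrace (tcomp F (tsum (tid B) G))) (ttrace (tcomp (tsum (tid A) G) F)))
  \<comment> \<open>trace: vanishing (unit and product)\<close>
 \<and> (\<forall>(F :: (_, _, _, 'w) trisk) A B. thom k F (A <+> {}) (B <+> {}) \<longrightarrow>
      tiso (ttrace F) (tcomp (tcomp (trunit_inv A) F) (trunit B)))
 \<and> (\<forall>(F :: (_, _, _, 'w) trisk) A B U V. thom k F (A <+> (U <+> V)) (B <+> (U <+> V)) \<longrightarrow>
      tiso (ttrace F) (ttrace (ttrace (tcomp (tcomp (tassoc A U V) F) (tassoc_inv B U V)))))
  \<comment> \<open>trace: superposing\<close>
 \<and> (\<forall>(F :: (_, _, _, 'w) trisk) (G :: (_, _, _, 'w) trisk) A B U W Z.
      thom k G W Z \<and> thom k F (A <+> U) (B <+> U) \<longrightarrow>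
      tiso (ttrace (tcomp (tcomp (tassoc W A U) (tsum G F)) (tassoc_inv Z B U))) (tsum G (ttrace F)))
  \<comment> \<open>trace: yanking\<close>
 \<and> (\<forall>U. card_of U <o k \<longrightarrow> tiso (ttrace (tswap U U) :: (_, _, _, 'w) trisk) (tid U))"
  using kappa_card kappa_uncountable
  apply (intro conjI allI impI; (elim conjE)?)
  apply (erule C_tid)
  apply (rule C_comp[OF kappa_card kappa_uncountable]; assumption)
  apply (rule tcomp_cong; assumption)
  apply (rule C_lunit; assumption)
  apply (rule C_runit; assumption)
  apply (rule C_assoc)
  apply (rule C_tsum[OF kappa_card kappa_uncountable]; assumption)
  apply (rule tsum_cong; assumption)
  apply (rule C_interchange; assumption)
  apply (rule C_tsum_tid)
  apply (use S_assoc[OF kappa_card kappa_uncountable] in blast)+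
  apply (use S_unit[OF kappa_card kappa_uncountable] in blast)+
  apply (rule N_assoc; assumption)
  apply (use N_unit in blast)
  apply (use N_unit in blast)
  apply (rule S_pentagon)
  apply (rule S_triangle)
  apply (use S_swap[OF kappa_card kappa_uncountable] in blast)
  apply (use S_swap[OF kappa_card kappa_uncountable] in blast)
  apply (rule N_swap; assumption)
  apply (rule S_hexagon)
  apply (rule T_thom[OF kappa_card kappa_uncountable]; assumption)
  apply (rule T_cong; assumption)
  apply (rule T_nat_in; assumption)
  apply (rule T_nat_out; assumption)
  apply (rule T_dinat; assumption)
  apply (rule T_van0; assumption)
  apply (rule T_van; assumption)
  apply (rule T_super; assumption)
  apply (rule T_yank)
  done

end
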